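(* Let $\lambda\in ba(\mathcal A)$ and $\mathscr M\subset ba(\mathcal A)$. There is a unique way of writing $\lambda=\lambda^c_{\mathscr M}+\lambda^\perp_{\mathscr M}$ with $\lambda^c_{\mathscr M},\lambda^\perp_{\mathscr M}\in ba(\mathcal A)$ such that (i) $\lambda^c_{\mathscr M}\ll m$ for some $m\in\mathbf A(\mathscr M)$, and (ii) $\lambda^\perp_{\mathscr M}\perp\mu$ for every $\mu\in\mathscr M$. If $\lambda$ is positive (resp. countably additive), then so are $\lambda^c_{\mathscr M}$ and $\lambda^\perp_{\mathscr M}$.
   Context: $\Omega$ is a set, $\mathcal A$ an algebra of subsets of $\Omega$, $ba(\mathcal A)$ the Banach lattice of bounded finitely additive real set functions on $\mathcal A$ with norm $\|\mu\|=|\mu|(\Omega)$, where $|\mu|$ is the total variation of $\mu$. For $\lambda,\mu\in ba(\mathcal A)$: $\mu\ll\lambda$ (also written $\lambda\gg\mu$) means that for every $\varepsilon>0$ there is $\delta>0$ with $|\lambda|(A)<\delta\Rightarrow|\mu|(A)<\varepsilon$ ($A\in\mathcal A$); $\mu\perp\lambda$ means that for every $\varepsilon>0$ there is $A\in\mathcal A$ with $|\mu|(A)+|\lambda|(A^c)<\varepsilon$. For $\mathscr M\subset ba(\mathcal A)$, $\mathbf A(\mathscr M)=\{\sum_n\alpha_n\frac{|\mu_n|}{1\vee\|\mu_n\|}:\mu_n\in\mathscr M,\ \alpha_n\ge0,\ \sum_n\alpha_n=1\}$ (countable convex combinations). *)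

theory Defs
  imports "HOL-Analysis.Analysis"
begin

text \<open>Set functions on an algebra A of subsets of Omega are modelled as
  functions of type 'a set => real; only their values on A matter.\<close>

definition fin_additive :: "'a set set \<Rightarrow> ('a set \<Rightarrow> real) \<Rightarrow> bool" where
  "fin_additive A mu \<longleftrightarrow>
     (\<forall>a\<in>A. \<forall>b\<in>A. a \<inter> b = {} \<longrightarrow> mu (a \<union> b) = mu a + mu b)"

definition bdd_setfun :: "'a set set \<Rightarrow> ('a set \<Rightarrow> real) \<Rightarrow> bool" where
  "bdd_setfun A mu \<longleftrightarrow> (\<exists>K. \<forall>a\<in>A. \<bar>mu a\<bar> \<le> K)"

definition ba :: "'a set set \<Rightarrow> ('a set \<Rightarrow> real) \<Rightarrow> bool" where
  "ba A mu \<longleftrightarrow> fin_additive A mu \<and> bdd_setfun A mu"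

definition tv :: "'a set set \<Rightarrow> ('a set \<Rightarrow> real) \<Rightarrow> 'a set \<Rightarrow> real" where
  "tv A mu E = Sup {(\<Sum>B\<in>P. \<bar>mu B\<bar>) | P. finite P \<and> P \<subseteq> A \<and> disjoint P \<and> (\<forall>B\<in>P. B \<subseteq> E)}"

definition ba_norm :: "'a set \<Rightarrow> 'a set set \<Rightarrow> ('a set \<Rightarrow> real) \<Rightarrow> real" where
  "ba_norm \<Omega> A mu = tv A mu \<Omega>"

text \<open>abs_cont A lam mu  means  mu << lam.\<close>
definition abs_cont :: "'a set set \<Rightarrow> ('a set \<Rightarrow> real) \<Rightarrow> ('a set \<Rightarrow> real) \<Rightarrow> bool" where
  "abs_cont A lam mu \<longleftrightarrow>
     (\<forall>\<epsilon>>0. \<exists>\<delta>>0. \<forall>E\<in>A. tv A lam E < \<delta> \<longrightarrow> tv A mu E < \<epsilon>)"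

definition singular :: "'a set \<Rightarrow> 'a set set \<Rightarrow> ('a set \<Rightarrow> real) \<Rightarrow> ('a set \<Rightarrow> real) \<Rightarrow> bool" where
  "singular \<Omega> A mu lam \<longleftrightarrow>
     (\<forall>\<epsilon>>0. \<exists>E\<in>A. tv A mu E + tv A lam (\<Omega> - E) < \<epsilon>)"

definition convA :: "'a set \<Rightarrow> 'a set set \<Rightarrow> ('a set \<Rightarrow> real) set \<Rightarrow> ('a set \<Rightarrow> real) set" where
  "convA \<Omega> A M =
     {(\<lambda>E. \<Sum>n. \<alpha> n * (tv A (mus n) E / max 1 (ba_norm \<Omega> A (mus n)))) | \<alpha> mus.
        (\<forall>n. mus n \<in> M) \<and> (\<forall>n. \<alpha> n \<ge> 0) \<and> \<alpha> sums 1}"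

definition positive_setfun :: "'a set set \<Rightarrow> ('a set \<Rightarrow> real) \<Rightarrow> bool" where
  "positive_setfun A mu \<longleftrightarrow> (\<forall>E\<in>A. mu E \<ge> 0)"

definition countably_additive_setfun :: "'a set set \<Rightarrow> ('a set \<Rightarrow> real) \<Rightarrow> bool" where
  "countably_additive_setfun A mu \<longleftrightarrow>
     (\<forall>F :: nat \<Rightarrow> 'a set. range F \<subseteq> A \<longrightarrow> disjoint_family F \<longrightarrow> (\<Union>n. F n) \<in> A \<longrightarrow>
        (\<lambda>n. mu (F n)) sums mu (\<Union>n. F n))"

definition is_decomp ::
  "'a set \<Rightarrow> 'a set set \<Rightarrow> ('a set \<Rightarrow> real) set \<Rightarrow> ('a set \<Rightarrow> real) \<Rightarrow>
   ('a set \<Rightarrow> real) \<Rightarrow> ('a set \<Rightarrow> real) \<Rightarrow> bool" where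
  "is_decomp \<Omega> A M lam lc lp \<longleftrightarrow>
     ba A lc \<and> ba A lp \<and> (\<forall>E\<in>A. lam E = lc E + lp E) \<and>
     (\<exists>m\<in>convA \<Omega> A M. abs_cont A m lc) \<and>
     (\<forall>mu\<in>M. singular \<Omega> A lp mu)"

end

theory Submission
  imports Defs
begin
lemma Sup_add_le:
  fixes S T :: "real set"
  assumes "S \<noteq> {}" "T \<noteq> {}" "\<And>a b. a \<in> S \<Longrightarrow> b \<in> T \<Longrightarrow> a + b \<le> c"
  shows "Sup S + Sup T \<le> c"
proof -
  have "Sup S \<le> c - b" if "b \<in> T" for b
    apply (rule cSup_least) using assms(1) apply simp using assms(3)[of _ b] that by (smt (verit))
  then have "\<And>b. b \<in> T \<Longrightarrow> b \<le> c - Sup S" by (smt (verit))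
  then have "Sup T \<le> c - Sup S" using assms by (intro cSup_least) auto
  then show ?thesis by simp
qed

lemma Inf_add_ge:
  fixes S T :: "real set"
  assumes "S \<noteq> {}" "T \<noteq> {}" "\<And>a b. a \<in> S \<Longrightarrow> b \<in> T \<Longrightarrow> c \<le> a + b"
  shows "c \<le> Inf S + Inf T"
proof -
  have "c - b \<le> Inf S" if "b \<in> T" for b
    apply (rule cInf_greatest) using assms(1) apply simp using assms(3)[of _ b] that by (smt (verit))
  then have "\<And>b. b \<in> T \<Longrightarrow> c - Inf S \<le> b" by (smt (verit))
  then have "c - Inf S \<le> Inf T" using assms by (intro cInf_greatest) auto
  then show ?thesis by simp
qed

context algebra
begin

lemma fa_un: "fin_additive M mu \<Longrightarrow> a \<in> M \<Longrightarrow> b \<in> M \<Longrightarrow> a \<inter> b = {} \<Longrightarrow> mu (a \<union> b) = mu a + mu b"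
  unfolding fin_additive_def by blast

lemma fa_empty: "fin_additive M mu \<Longrightarrow> mu {} = 0"
  using fa_un[of mu "{}" "{}"] by simp

lemma fa_split: "fin_additive M mu \<Longrightarrow> a \<in> M \<Longrightarrow> b \<in> M \<Longrightarrow> mu a = mu (a \<inter> b) + mu (a - b)"
proof -
  assume "fin_additive M mu" "a \<in> M" "b \<in> M"
  moreover have "a = (a \<inter> b) \<union> (a - b)" by auto
  moreover have "(a \<inter> b) \<inter> (a - b) = {}" by auto
  ultimately show ?thesis using fa_un[of mu "a \<inter> b" "a - b"] by (metis Diff Int)
qed

lemma fa_diff: "fin_additive M mu \<Longrightarrow> a \<in> M \<Longrightarrow> b \<in> M \<Longrightarrow> b \<subseteq> a \<Longrightarrow> mu (a - b) = mu a - mu b"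
  using fa_split[of mu a b] by (simp add: Int_absorb1)

lemma pos_mono: "fin_additive M mu \<Longrightarrow> positive_setfun M mu \<Longrightarrow> a \<in> M \<Longrightarrow> b \<in> M \<Longrightarrow> a \<subseteq> b \<Longrightarrow> mu a \<le> mu b"
proof -
  assume h: "fin_additive M mu" "positive_setfun M mu" "a \<in> M" "b \<in> M" "a \<subseteq> b"
  then have "0 \<le> mu (b - a)" unfolding positive_setfun_def by blast
  then show ?thesis using fa_diff[of mu b a] h by simp
qed

lemma fa_Union:
  assumes fa: "fin_additive M mu"
  shows "finite P \<Longrightarrow> P \<subseteq> M \<Longrightarrow> disjoint P \<Longrightarrow> mu (\<Union>P) = (\<Sum>B\<in>P. mu B)"
proof (induction P rule: finite_induct)
  case empty then show ?case using fa_empty[OF fa] by simp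
next
  case (insert x P)
  have d: "disjoint P" using insert.prems(2) by (simp add: pairwise_insert)
  have xP: "x \<inter> \<Union>P = {}"
  proof -
    have "\<And>B. B \<in> P \<Longrightarrow> x \<inter> B = {}"
      using insert.prems(2) insert.hyps(2) unfolding pairwise_def disjnt_def by (metis insertCI)
    then show ?thesis by blast
  qed
  have xM: "x \<in> M" and PM: "P \<subseteq> M" using insert.prems(1) by auto
  have UM: "\<Union>P \<in> M" using PM insert.hyps(1) by (intro finite_Union)
  have "mu (x \<union> \<Union>P) = mu x + mu (\<Union>P)" using fa_un[OF fa xM UM xP] .
  then show ?case using insert.IH[OF PM d] insert.hyps by simp
qed

lemma ba_bound_sum:
  assumes "ba M mu"
  obtains K where "\<And>P. finite P \<Longrightarrow> P \<subseteq> M \<Longrightarrow> disjoint P \<Longrightarrow> (\<Sum>B\<in>P. \<bar>mu B\<bar>) \<le> K"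
proof -
  obtain K0 where K0: "\<And>a. a \<in> M \<Longrightarrow> \<bar>mu a\<bar> \<le> K0" using assms unfolding ba_def bdd_setfun_def by blast
  have fa: "fin_additive M mu" using assms ba_def by blast
  have "(\<Sum>B\<in>P. \<bar>mu B\<bar>) \<le> 2 * K0" if P: "finite P" "P \<subseteq> M" "disjoint P" for P
  proof -
    let ?Q = "{B\<in>P. 0 \<le> mu B}"
    have fQ: "finite ?Q" "finite (P - ?Q)" using P by auto
    have dQ: "disjoint ?Q" "disjoint (P - ?Q)" using P(3) by (auto simp: pairwise_def)
    have QM: "?Q \<subseteq> M" "P - ?Q \<subseteq> M" using P by auto
    have "(\<Sum>B\<in>P. \<bar>mu B\<bar>) = (\<Sum>B\<in>?Q. \<bar>mu B\<bar>) + (\<Sum>B\<in>P - ?Q. \<bar>mu B\<bar>)"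
      using P sum.subset_diff[of ?Q P "\<lambda>B. \<bar>mu B\<bar>"] by (simp add: add.commute)
    also have "(\<Sum>B\<in>?Q. \<bar>mu B\<bar>) = (\<Sum>B\<in>?Q. mu B)" by (rule sum.cong) auto
    also have "\<dots> = mu (\<Union>?Q)" using fa_Union[OF fa fQ(1) QM(1) dQ(1)] by simp
    also have "(\<Sum>B\<in>P - ?Q. \<bar>mu B\<bar>) = - (\<Sum>B\<in>P - ?Q. mu B)" by (simp add: sum_negf[symmetric], rule sum.cong, auto)
    also have "(\<Sum>B\<in>P - ?Q. mu B) = mu (\<Union>(P - ?Q))" using fa_Union[OF fa fQ(2) QM(2) dQ(2)] by simp
    also have "mu (\<Union>?Q) + - mu (\<Union>(P - ?Q)) \<le> K0 + K0"
      using K0[OF finite_Union[OF fQ(1) QM(1)]] K0[OF finite_Union[OF fQ(2) QM(2)]] by linarith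
    finally show ?thesis by simp
  qed
  then show ?thesis using that by blast
qed

end

definition tvset :: "'a set set \<Rightarrow> ('a set \<Rightarrow> real) \<Rightarrow> 'a set \<Rightarrow> real set" where
  "tvset A mu E = {(\<Sum>B\<in>P. \<bar>mu B\<bar>) | P. finite P \<and> P \<subseteq> A \<and> disjoint P \<and> (\<forall>B\<in>P. B \<subseteq> E)}"

lemma tv_tvset: "tv A mu E = Sup (tvset A mu E)"
  unfolding tv_def tvset_def by simp

context algebra
begin

lemma tvset_ne: "tvset M mu E \<noteq> {}"
proof -
  have "(\<Sum>B\<in>{}. \<bar>mu B\<bar>) \<in> tvset M mu E" unfolding tvset_def
    by (intro CollectI exI[of _ "{}"]) auto
  then show ?thesis by blast
qed

lemma tvset_bdd: "ba M mu \<Longrightarrow> bdd_above (tvset M mu E)"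
proof -
  assume "ba M mu"
  then obtain K where K: "\<And>P. finite P \<Longrightarrow> P \<subseteq> M \<Longrightarrow> disjoint P \<Longrightarrow> (\<Sum>B\<in>P. \<bar>mu B\<bar>) \<le> K"
    using ba_bound_sum by blast
  show ?thesis unfolding bdd_above_def tvset_def using K by blast
qed

lemma tv_ge:
  assumes "ba M mu" "finite P" "P \<subseteq> M" "disjoint P" "\<forall>B\<in>P. B \<subseteq> E"
  shows "(\<Sum>B\<in>P. \<bar>mu B\<bar>) \<le> tv M mu E"
  unfolding tv_tvset
  by (rule cSup_upper) (use assms tvset_bdd in \<open>auto simp: tvset_def\<close>)

lemma tv_le:
  assumes "\<And>P. finite P \<Longrightarrow> P \<subseteq> M \<Longrightarrow> disjoint P \<Longrightarrow> \<forall>B\<in>P. B \<subseteq> E \<Longrightarrow> (\<Sum>B\<in>P. \<bar>mu B\<bar>) \<le> c"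
  shows "tv M mu E \<le> c"
  unfolding tv_tvset
  by (rule cSup_least) (use assms tvset_ne in \<open>auto simp: tvset_def\<close>)

lemma tv_nonneg: "ba M mu \<Longrightarrow> 0 \<le> tv M mu E"
  using tv_ge[of mu "{}" E] by simp

lemma abs_le_tv: "ba M mu \<Longrightarrow> E \<in> M \<Longrightarrow> \<bar>mu E\<bar> \<le> tv M mu E"
  using tv_ge[of mu "{E}" E] by simp

lemma tvset_mono: "E \<subseteq> E' \<Longrightarrow> tvset M mu E \<subseteq> tvset M mu E'"
  unfolding tvset_def by blast

lemma tv_mono: "ba M mu \<Longrightarrow> E \<subseteq> E' \<Longrightarrow> tv M mu E \<le> tv M mu E'"
  unfolding tv_tvset
  by (rule cSup_subset_mono[OF tvset_ne tvset_bdd tvset_mono])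

lemma tv_le_norm: "ba M mu \<Longrightarrow> E \<in> M \<Longrightarrow> tv M mu E \<le> tv M mu \<Omega>"
  using tv_mono sets_into_space by blast

lemma tv_empty: "ba M mu \<Longrightarrow> tv M mu {} = 0"
proof -
  assume ba: "ba M mu"
  have fa: "fin_additive M mu" using ba ba_def by blast
  have "(\<Sum>B\<in>P. \<bar>mu B\<bar>) \<le> 0" if "\<forall>B\<in>P. B \<subseteq> {}" for P :: "'a set set"
  proof -
    have "\<forall>B\<in>P. \<bar>mu B\<bar> = 0" using that fa_empty[OF fa] by auto
    then show ?thesis by simp
  qed
  then have "tv M mu {} \<le> 0" by (intro tv_le) auto
  then show ?thesis using tv_nonneg[OF ba] by (simp add: order_antisym)
qed

lemma tvset_sub_aux:
  assumes "\<And>P. P \<subseteq> M \<Longrightarrow> (\<Sum>B\<in>P. \<bar>mu B\<bar>) = (\<Sum>B\<in>P. \<bar>nu B\<bar>)"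
  shows "tvset M mu E \<subseteq> tvset M nu E"
proof
  fix x assume "x \<in> tvset M mu E"
  then obtain P where P: "x = (\<Sum>B\<in>P. \<bar>mu B\<bar>)" "finite P" "P \<subseteq> M" "disjoint P" "\<forall>B\<in>P. B \<subseteq> E"
    unfolding tvset_def by blast
  show "x \<in> tvset M nu E" unfolding tvset_def
    by (intro CollectI exI[of _ P]) (use P assms in auto)
qed

lemma tv_cong: "(\<And>E. E \<in> M \<Longrightarrow> mu E = nu E) \<Longrightarrow> tv M mu E = tv M nu E"
proof -
  assume h: "\<And>E. E \<in> M \<Longrightarrow> mu E = nu E"
  have eq: "(\<Sum>B\<in>P. \<bar>mu B\<bar>) = (\<Sum>B\<in>P. \<bar>nu B\<bar>)" if "P \<subseteq> M" for P
    using h that by (intro sum.cong) auto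
  have "tvset M mu E = tvset M nu E"
    using tvset_sub_aux[of mu nu E] tvset_sub_aux[of nu mu E] eq by (metis subset_antisym)
  then show ?thesis by (simp add: tv_tvset)
qed

lemma ba_add: "ba M mu \<Longrightarrow> ba M nu \<Longrightarrow> ba M (\<lambda>E. mu E + nu E)"
proof -
  assume a: "ba M mu" "ba M nu"
  then obtain K1 K2 where "\<forall>a\<in>M. \<bar>mu a\<bar> \<le> K1" "\<forall>a\<in>M. \<bar>nu a\<bar> \<le> K2" unfolding ba_def bdd_setfun_def by blast
  then have "\<forall>a\<in>M. \<bar>mu a + nu a\<bar> \<le> K1 + K2" by (smt (verit))
  moreover have "fin_additive M (\<lambda>E. mu E + nu E)" using a unfolding ba_def fin_additive_def by simp
  ultimately show ?thesis unfolding ba_def bdd_setfun_def by blast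
qed

lemma ba_diff: "ba M mu \<Longrightarrow> ba M nu \<Longrightarrow> ba M (\<lambda>E. mu E - nu E)"
proof -
  assume a: "ba M mu" "ba M nu"
  then obtain K1 K2 where "\<forall>a\<in>M. \<bar>mu a\<bar> \<le> K1" "\<forall>a\<in>M. \<bar>nu a\<bar> \<le> K2" unfolding ba_def bdd_setfun_def by blast
  then have "\<forall>a\<in>M. \<bar>mu a - nu a\<bar> \<le> K1 + K2" by (smt (verit))
  moreover have "fin_additive M (\<lambda>E. mu E - nu E)" using a unfolding ba_def fin_additive_def by simp
  ultimately show ?thesis unfolding ba_def bdd_setfun_def by blast
qed

lemma tv_add: "ba M mu \<Longrightarrow> ba M nu \<Longrightarrow> tv M (\<lambda>E. mu E + nu E) E \<le> tv M mu E + tv M nu E"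
proof (rule tv_le)
  fix P assume a: "ba M mu" "ba M nu" and P: "finite P" "P \<subseteq> M" "disjoint P" "\<forall>B\<in>P. B \<subseteq> E"
  have "(\<Sum>B\<in>P. \<bar>mu B + nu B\<bar>) \<le> (\<Sum>B\<in>P. \<bar>mu B\<bar> + \<bar>nu B\<bar>)" by (intro sum_mono abs_triangle_ineq)
  also have "\<dots> = (\<Sum>B\<in>P. \<bar>mu B\<bar>) + (\<Sum>B\<in>P. \<bar>nu B\<bar>)" by (simp add: sum.distrib)
  also have "\<dots> \<le> tv M mu E + tv M nu E" using tv_ge[OF a(1) P] tv_ge[OF a(2) P] by simp
  finally show "(\<Sum>B\<in>P. \<bar>mu B + nu B\<bar>) \<le> tv M mu E + tv M nu E" .
qed

lemma tv_diff: "ba M mu \<Longrightarrow> ba M nu \<Longrightarrow> tv M (\<lambda>E. mu E - nu E) E \<le> tv M mu E + tv M nu E"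
proof (rule tv_le)
  fix P assume a: "ba M mu" "ba M nu" and P: "finite P" "P \<subseteq> M" "disjoint P" "\<forall>B\<in>P. B \<subseteq> E"
  have "(\<Sum>B\<in>P. \<bar>mu B - nu B\<bar>) \<le> (\<Sum>B\<in>P. \<bar>mu B\<bar> + \<bar>nu B\<bar>)" by (intro sum_mono abs_triangle_ineq4)
  also have "\<dots> = (\<Sum>B\<in>P. \<bar>mu B\<bar>) + (\<Sum>B\<in>P. \<bar>nu B\<bar>)" by (simp add: sum.distrib)
  also have "\<dots> \<le> tv M mu E + tv M nu E" using tv_ge[OF a(1) P] tv_ge[OF a(2) P] by simp
  finally show "(\<Sum>B\<in>P. \<bar>mu B - nu B\<bar>) \<le> tv M mu E + tv M nu E" .
qed

lemma tv_pos:
  assumes ba: "ba M mu" and pos: "positive_setfun M mu" and E: "E \<in> M"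
  shows "tv M mu E = mu E"
proof (rule order_antisym)
  have fa: "fin_additive M mu" using ba ba_def by blast
  show "tv M mu E \<le> mu E"
  proof (rule tv_le)
    fix P assume P: "finite P" "P \<subseteq> M" "disjoint P" "\<forall>B\<in>P. B \<subseteq> E"
    have "(\<Sum>B\<in>P. \<bar>mu B\<bar>) = (\<Sum>B\<in>P. mu B)" using pos P(2) unfolding positive_setfun_def
      by (intro sum.cong) auto
    also have "\<dots> = mu (\<Union>P)" using fa_Union[OF fa P(1-3)] by simp
    also have "\<dots> \<le> mu E" using P by (intro pos_mono[OF fa pos] finite_Union E) auto
    finally show "(\<Sum>B\<in>P. \<bar>mu B\<bar>) \<le> mu E" .
  qed
  show "mu E \<le> tv M mu E" using abs_le_tv[OF ba E] by simp
qed

end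

context algebra
begin

lemma tv_additive:
  assumes ba: "ba M mu" and E: "E1 \<in> M" "E2 \<in> M" "E1 \<inter> E2 = {}"
  shows "tv M mu (E1 \<union> E2) = tv M mu E1 + tv M mu E2"
proof (rule order_antisym)
  have fa: "fin_additive M mu" using ba ba_def by blast
  show "tv M mu E1 + tv M mu E2 \<le> tv M mu (E1 \<union> E2)"
    unfolding tv_tvset[of M mu E1] tv_tvset[of M mu E2]
  proof (rule Sup_add_le[OF tvset_ne tvset_ne])
    fix a b assume "a \<in> tvset M mu E1" "b \<in> tvset M mu E2"
    then obtain P1 P2 where P1: "a = (\<Sum>B\<in>P1. \<bar>mu B\<bar>)" "finite P1" "P1 \<subseteq> M" "disjoint P1" "\<forall>B\<in>P1. B \<subseteq> E1"
      and P2: "b = (\<Sum>B\<in>P2. \<bar>mu B\<bar>)" "finite P2" "P2 \<subseteq> M" "disjoint P2" "\<forall>B\<in>P2. B \<subseteq> E2"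
      unfolding tvset_def by blast
    have i: "(\<Sum>B\<in>P1 \<inter> P2. \<bar>mu B\<bar>) = 0"
    proof (rule sum.neutral, rule ballI)
      fix B assume "B \<in> P1 \<inter> P2"
      then have "B \<subseteq> E1" "B \<subseteq> E2" using P1(5) P2(5) by auto
      then have "B = {}" using E(3) by blast
      then show "\<bar>mu B\<bar> = 0" using fa_empty[OF fa] by simp
    qed
    have d: "disjoint (P1 \<union> P2)"
      unfolding pairwise_def disjnt_def
    proof (intro ballI impI)
      fix x y assume "x \<in> P1 \<union> P2" "y \<in> P1 \<union> P2" "x \<noteq> y"
      note xy = this
      have d1: "\<And>x y. x \<in> P1 \<Longrightarrow> y \<in> P1 \<Longrightarrow> x \<noteq> y \<Longrightarrow> x \<inter> y = {}"
        using P1(4) unfolding pairwise_def disjnt_def by blast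
      have d2: "\<And>x y. x \<in> P2 \<Longrightarrow> y \<in> P2 \<Longrightarrow> x \<noteq> y \<Longrightarrow> x \<inter> y = {}"
        using P2(4) unfolding pairwise_def disjnt_def by blast
      have c: "\<And>x y. x \<in> P1 \<Longrightarrow> y \<in> P2 \<Longrightarrow> x \<inter> y = {}"
      proof -
        fix x y assume "x \<in> P1" "y \<in> P2"
        then have "x \<subseteq> E1" "y \<subseteq> E2" using P1(5) P2(5) by auto
        then show "x \<inter> y = {}" using E(3) by blast
      qed
      show "x \<inter> y = {}"
      proof (cases "x \<in> P1")
        case True
        then show ?thesis
        proof (cases "y \<in> P1")
          case True then show ?thesis using d1 \<open>x \<in> P1\<close> xy(3) by simp
        next
          case False then have "y \<in> P2" using xy(2) by simp
          then show ?thesis using c \<open>x \<in> P1\<close> by simp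
        qed
      next
        case False then have x2: "x \<in> P2" using xy(1) by simp
        then show ?thesis
        proof (cases "y \<in> P1")
          case True then show ?thesis using c[of y x] x2 by (simp add: Int_commute)
        next
          case False then have "y \<in> P2" using xy(2) by simp
          then show ?thesis using d2 x2 xy(3) by simp
        qed
      qed
    qed
    have "a + b = (\<Sum>B\<in>P1 \<union> P2. \<bar>mu B\<bar>)"
      using sum.union_inter[OF P1(2) P2(2), of "\<lambda>B. \<bar>mu B\<bar>"] i P1(1) P2(1) by simp
    also have "\<dots> \<le> tv M mu (E1 \<union> E2)"
      using P1 P2 d by (intro tv_ge[OF ba]) auto
    finally show "a + b \<le> tv M mu (E1 \<union> E2)" .
  qed
  show "tv M mu (E1 \<union> E2) \<le> tv M mu E1 + tv M mu E2"
  proof (rule tv_le)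
    fix P assume P: "finite P" "P \<subseteq> M" "disjoint P" "\<forall>B\<in>P. B \<subseteq> E1 \<union> E2"
    have part: "(\<Sum>B\<in>P. \<bar>mu (B \<inter> F)\<bar>) \<le> tv M mu F" if F: "F \<in> M" for F
    proof -
      have nz: "\<bar>mu (x \<inter> F)\<bar> = 0" if "x \<in> P" "y \<in> P" "x \<noteq> y" "x \<inter> F = y \<inter> F" for x y
      proof -
        note that
        then have "x \<inter> y = {}" using P(3) unfolding pairwise_def disjnt_def by blast
        then have "x \<inter> F = {}" using \<open>x \<inter> F = y \<inter> F\<close> by blast
        then show "\<bar>mu (x \<inter> F)\<bar> = 0" using fa_empty[OF fa] by simp
      qed
      have "(\<Sum>B\<in>P. \<bar>mu (B \<inter> F)\<bar>) = (\<Sum>C\<in>(\<lambda>B. B \<inter> F) ` P. \<bar>mu C\<bar>)"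
        using sum.reindex_nontrivial[OF P(1), of "\<lambda>B. B \<inter> F" "\<lambda>C. \<bar>mu C\<bar>"] nz
        by (simp add: comp_def)
      also have "\<dots> \<le> tv M mu F"
      proof (rule tv_ge[OF ba])
        show "finite ((\<lambda>B. B \<inter> F) ` P)" using P(1) by simp
        show "(\<lambda>B. B \<inter> F) ` P \<subseteq> M" using P(2) F by auto
        show "disjoint ((\<lambda>B. B \<inter> F) ` P)" using P(3) by (rule disjoint_image_subset) auto
        show "\<forall>B\<in>(\<lambda>B. B \<inter> F) ` P. B \<subseteq> F" by auto
      qed
      finally show ?thesis .
    qed
    have "(\<Sum>B\<in>P. \<bar>mu B\<bar>) \<le> (\<Sum>B\<in>P. \<bar>mu (B \<inter> E1)\<bar> + \<bar>mu (B \<inter> E2)\<bar>)"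
    proof (rule sum_mono)
      fix B assume B: "B \<in> P"
      then have BM: "B \<in> M" using P(2) by auto
      have "B \<subseteq> E1 \<union> E2" using B P(4) by simp
      then have "B - E1 = B \<inter> E2" using E(3) by blast
      then have "mu B = mu (B \<inter> E1) + mu (B \<inter> E2)" using fa_split[OF fa BM E(1)] by simp
      then show "\<bar>mu B\<bar> \<le> \<bar>mu (B \<inter> E1)\<bar> + \<bar>mu (B \<inter> E2)\<bar>" by simp
    qed
    also have "\<dots> = (\<Sum>B\<in>P. \<bar>mu (B \<inter> E1)\<bar>) + (\<Sum>B\<in>P. \<bar>mu (B \<inter> E2)\<bar>)" by (simp add: sum.distrib)
    also have "\<dots> \<le> tv M mu E1 + tv M mu E2" using part[OF E(1)] part[OF E(2)] by simp
    finally show "(\<Sum>B\<in>P. \<bar>mu B\<bar>) \<le> tv M mu E1 + tv M mu E2" .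
  qed
qed

lemma tv_subadd:
  assumes ba: "ba M mu" and E: "E1 \<in> M" "E2 \<in> M"
  shows "tv M mu (E1 \<union> E2) \<le> tv M mu E1 + tv M mu E2"
proof -
  have "E1 \<union> E2 = E1 \<union> (E2 - E1)" by auto
  then have "tv M mu (E1 \<union> E2) = tv M mu E1 + tv M mu (E2 - E1)"
    using tv_additive[OF ba E(1) Diff[OF E(2) E(1)]] by auto
  also have "tv M mu (E2 - E1) \<le> tv M mu E2" by (rule tv_mono[OF ba]) auto
  finally show ?thesis by simp
qed

lemma ba_tv: "ba M mu \<Longrightarrow> ba M (tv M mu)"
proof -
  assume ba: "ba M mu"
  have "fin_additive M (tv M mu)" unfolding fin_additive_def using tv_additive[OF ba] by blast
  moreover have "\<forall>a\<in>M. \<bar>tv M mu a\<bar> \<le> tv M mu \<Omega>" using tv_nonneg[OF ba] tv_le_norm[OF ba] by simp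
  ultimately show ?thesis unfolding ba_def bdd_setfun_def by blast
qed

lemma pos_tv: "ba M mu \<Longrightarrow> positive_setfun M (tv M mu)"
  unfolding positive_setfun_def using tv_nonneg by blast

lemma tv_Union_le:
  assumes ba: "ba M mu" and fin: "finite I" and F: "\<And>i. i \<in> I \<Longrightarrow> F i \<in> M"
  shows "tv M mu (\<Union>i\<in>I. F i) \<le> (\<Sum>i\<in>I. tv M mu (F i))"
  using fin F
proof (induction I rule: finite_induct)
  case empty then show ?case using tv_empty[OF ba] by simp
next
  case (insert x I)
  have "tv M mu (\<Union>i\<in>insert x I. F i) = tv M mu (F x \<union> (\<Union>i\<in>I. F i))" by simp
  also have "\<dots> \<le> tv M mu (F x) + tv M mu (\<Union>i\<in>I. F i)"
    using insert by (intro tv_subadd[OF ba]) auto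
  also have "\<dots> \<le> tv M mu (F x) + (\<Sum>i\<in>I. tv M mu (F i))" using insert by simp
  finally show ?case using insert by simp
qed

end

definition jpos :: "'a set set \<Rightarrow> ('a set \<Rightarrow> real) \<Rightarrow> 'a set \<Rightarrow> real" where
  "jpos A mu E = Sup {mu F | F. F \<in> A \<and> F \<subseteq> E}"

context algebra
begin

lemma jset_ne: "mu {} \<in> {mu F | F. F \<in> M \<and> F \<subseteq> E}"
  by (intro CollectI exI[of _ "{}"]) auto

lemma jset_bdd: "ba M mu \<Longrightarrow> bdd_above {mu F | F. F \<in> M \<and> F \<subseteq> E}"
proof -
  assume "ba M mu"
  then obtain K where "\<forall>a\<in>M. \<bar>mu a\<bar> \<le> K" unfolding ba_def bdd_setfun_def by blast
  then have "\<And>x. x \<in> {mu F | F. F \<in> M \<and> F \<subseteq> E} \<Longrightarrow> x \<le> K" by auto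
  then show ?thesis by (rule bdd_aboveI)
qed

lemma jpos_ge: "ba M mu \<Longrightarrow> F \<in> M \<Longrightarrow> F \<subseteq> E \<Longrightarrow> mu F \<le> jpos M mu E"
  unfolding jpos_def by (rule cSup_upper[OF _ jset_bdd]) auto

lemma jpos_le: "(\<And>F. F \<in> M \<Longrightarrow> F \<subseteq> E \<Longrightarrow> mu F \<le> c) \<Longrightarrow> jpos M mu E \<le> c"
  unfolding jpos_def by (rule cSup_least) (use jset_ne in auto)

lemma jpos_nonneg: "ba M mu \<Longrightarrow> 0 \<le> jpos M mu E"
  using jpos_ge[of mu "{}" E] fa_empty[of mu] unfolding ba_def by auto

lemma jpos_ge_self: "ba M mu \<Longrightarrow> E \<in> M \<Longrightarrow> mu E \<le> jpos M mu E"
  using jpos_ge by blast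

lemma jpos_fa: assumes ba: "ba M mu" shows "fin_additive M (jpos M mu)"
  unfolding fin_additive_def
proof (intro ballI impI)
  fix E1 E2 assume E: "E1 \<in> M" "E2 \<in> M" "E1 \<inter> E2 = {}"
  have fa: "fin_additive M mu" using ba ba_def by blast
  show "jpos M mu (E1 \<union> E2) = jpos M mu E1 + jpos M mu E2"
  proof (rule order_antisym)
    show "jpos M mu (E1 \<union> E2) \<le> jpos M mu E1 + jpos M mu E2"
    proof (rule jpos_le)
      fix F assume F: "F \<in> M" "F \<subseteq> E1 \<union> E2"
      have "F - E1 = F \<inter> E2" using F(2) E(3) by blast
      then have "mu F = mu (F \<inter> E1) + mu (F \<inter> E2)" using fa_split[OF fa F(1) E(1)] by simp
      also have "\<dots> \<le> jpos M mu E1 + jpos M mu E2"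
        using F E by (intro add_mono jpos_ge[OF ba]) auto
      finally show "mu F \<le> jpos M mu E1 + jpos M mu E2" .
    qed
    show "jpos M mu E1 + jpos M mu E2 \<le> jpos M mu (E1 \<union> E2)"
      unfolding jpos_def[of M mu E1] jpos_def[of M mu E2]
    proof (rule Sup_add_le)
      show "{mu F |F. F \<in> M \<and> F \<subseteq> E1} \<noteq> {}" "{mu F |F. F \<in> M \<and> F \<subseteq> E2} \<noteq> {}" using jset_ne by blast+
      fix a b assume "a \<in> {mu F |F. F \<in> M \<and> F \<subseteq> E1}" "b \<in> {mu F |F. F \<in> M \<and> F \<subseteq> E2}"
      then obtain F1 F2 where F: "a = mu F1" "F1 \<in> M" "F1 \<subseteq> E1" "b = mu F2" "F2 \<in> M" "F2 \<subseteq> E2" by blast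
      have "F1 \<inter> F2 = {}" using F E(3) by blast
      then have "a + b = mu (F1 \<union> F2)" using fa_un[OF fa F(2) F(5)] F by simp
      also have "\<dots> \<le> jpos M mu (E1 \<union> E2)" using F by (intro jpos_ge[OF ba]) auto
      finally show "a + b \<le> jpos M mu (E1 \<union> E2)" .
    qed
  qed
qed

lemma jpos_ba: assumes ba: "ba M mu" shows "ba M (jpos M mu)"
proof -
  obtain K where K: "\<forall>a\<in>M. \<bar>mu a\<bar> \<le> K" using ba unfolding ba_def bdd_setfun_def by blast
  have "jpos M mu E \<le> K" for E by (rule jpos_le) (use K in auto)
  then have "\<forall>a\<in>M. \<bar>jpos M mu a\<bar> \<le> K" using jpos_nonneg[OF ba] by (simp add: abs_of_nonneg)
  then show ?thesis unfolding ba_def bdd_setfun_def using jpos_fa[OF ba] by blast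
qed

lemma jpos_pos: "ba M mu \<Longrightarrow> positive_setfun M (jpos M mu)"
  unfolding positive_setfun_def using jpos_nonneg by blast

lemma jpos_of_pos: assumes ba: "ba M mu" and pos: "positive_setfun M mu" and E: "E \<in> M"
  shows "jpos M mu E = mu E"
proof (rule order_antisym)
  have fa: "fin_additive M mu" using ba ba_def by blast
  show "jpos M mu E \<le> mu E" by (rule jpos_le) (use pos_mono[OF fa pos _ E] in auto)
  show "mu E \<le> jpos M mu E" using jpos_ge_self[OF ba E] .
qed

lemma fa_UN_lessThan:
  fixes F :: "nat \<Rightarrow> 'a set"
  assumes fa: "fin_additive M mu" and F: "range F \<subseteq> M" "disjoint_family F"
  shows "mu (\<Union>i<N. F i) = (\<Sum>i<N. mu (F i))"
proof (induction N)
  case 0 then show ?case using fa_empty[OF fa] by simp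
next
  case (Suc N)
  have "(\<Union>i<Suc N. F i) = (\<Union>i<N. F i) \<union> F N" by (auto simp: lessThan_Suc)
  moreover have "(\<Union>i<N. F i) \<inter> F N = {}"
  proof -
    have "F i \<inter> F N = {}" if "i < N" for i using F(2) that unfolding disjoint_family_on_def by simp
    then show ?thesis by blast
  qed
  moreover have "(\<Union>i<N. F i) \<in> M" using F(1) by (intro finite_UN) auto
  moreover have "F N \<in> M" using F(1) by blast
  ultimately have "mu (\<Union>i<Suc N. F i) = mu (\<Union>i<N. F i) + mu (F N)"
    using fa_un[OF fa] by simp
  then show ?case using Suc by simp
qed

lemma ca_le:
  assumes bap: "ba M p" and posp: "positive_setfun M p" and cap: "countably_additive_setfun M p"
    and fan: "fin_additive M nu" and posn: "positive_setfun M nu" and le: "\<And>E. E \<in> M \<Longrightarrow> nu E \<le> p E"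
  shows "countably_additive_setfun M nu"
  unfolding countably_additive_setfun_def
proof (intro allI impI)
  fix F :: "nat \<Rightarrow> 'a set" assume F: "range F \<subseteq> M" "disjoint_family F" and U: "(\<Union>n. F n) \<in> M"
  have fap: "fin_additive M p" using bap ba_def by blast
  let ?U = "\<Union>n. F n"
  have UN: "(\<Union>i<N. F i) \<in> M" for N using F(1) by (intro finite_UN) auto
  have sub: "(\<Union>i<N. F i) \<subseteq> ?U" for N by auto
  have eq: "nu ?U - (\<Sum>i<N. nu (F i)) = nu (?U - (\<Union>i<N. F i))" for N
    using fa_diff[OF fan U UN sub] fa_UN_lessThan[OF fan F] by simp
  have eqp: "p ?U - (\<Sum>i<N. p (F i)) = p (?U - (\<Union>i<N. F i))" for N
    using fa_diff[OF fap U UN sub] fa_UN_lessThan[OF fap F] by simp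
  have lo: "0 \<le> nu ?U - (\<Sum>i<N. nu (F i))" for N
    using eq posn Diff[OF U UN] unfolding positive_setfun_def by simp
  have hi: "nu ?U - (\<Sum>i<N. nu (F i)) \<le> p ?U - (\<Sum>i<N. p (F i))" for N
    using eq eqp le[OF Diff[OF U UN]] by simp
  have "(\<lambda>n. p (F n)) sums p ?U" using cap F U unfolding countably_additive_setfun_def by blast
  then have "(\<lambda>N. \<Sum>i<N. p (F i)) \<longlonglongrightarrow> p ?U" by (simp add: sums_def)
  then have "(\<lambda>N. p ?U - (\<Sum>i<N. p (F i))) \<longlonglongrightarrow> p ?U - p ?U" by (intro tendsto_intros)
  then have h0: "(\<lambda>N. p ?U - (\<Sum>i<N. p (F i))) \<longlonglongrightarrow> 0" by simp
  have "(\<lambda>N. nu ?U - (\<Sum>i<N. nu (F i))) \<longlonglongrightarrow> 0"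
    by (rule tendsto_sandwich[OF _ _ tendsto_const h0]) (use lo hi in auto)
  then have "(\<lambda>N. nu ?U - (nu ?U - (\<Sum>i<N. nu (F i)))) \<longlonglongrightarrow> nu ?U - 0" by (intro tendsto_intros)
  then show "(\<lambda>n. nu (F n)) sums nu ?U" by (simp add: sums_def)
qed

lemma ca_diff: "countably_additive_setfun M a \<Longrightarrow> countably_additive_setfun M b \<Longrightarrow>
   countably_additive_setfun M (\<lambda>E. a E - b E)"
  unfolding countably_additive_setfun_def by (simp add: sums_diff)

lemma ca_jpos:
  assumes ba: "ba M mu" and ca: "countably_additive_setfun M mu"
  shows "countably_additive_setfun M (jpos M mu)"
  unfolding countably_additive_setfun_def
proof (intro allI impI)
  fix F :: "nat \<Rightarrow> 'a set" assume F: "range F \<subseteq> M" "disjoint_family F" and U: "(\<Union>n. F n) \<in> M"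
  let ?U = "\<Union>n. F n"
  let ?J = "jpos M mu"
  have faJ: "fin_additive M ?J" by (rule jpos_fa[OF ba])
  have UN: "(\<Union>i<N. F i) \<in> M" for N using F(1) by (intro finite_UN) auto
  have part: "(\<Sum>i<N. ?J (F i)) \<le> ?J ?U" for N
  proof -
    have "(\<Sum>i<N. ?J (F i)) = ?J (\<Union>i<N. F i)" using fa_UN_lessThan[OF faJ F] by simp
    also have "\<dots> \<le> ?J ?U" by (intro pos_mono[OF faJ jpos_pos[OF ba] UN U]) auto
    finally show ?thesis .
  qed
  have summ: "summable (\<lambda>n. ?J (F n))"
    by (rule summableI_nonneg_bounded[OF jpos_nonneg[OF ba] part])
  have le1: "suminf (\<lambda>n. ?J (F n)) \<le> ?J ?U" by (rule suminf_le_const[OF summ part])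
  have le2: "?J ?U \<le> suminf (\<lambda>n. ?J (F n))"
  proof (rule jpos_le)
    fix G assume G: "G \<in> M" "G \<subseteq> ?U"
    have GF: "range (\<lambda>n. G \<inter> F n) \<subseteq> M"
    proof
      fix x assume "x \<in> range (\<lambda>n. G \<inter> F n)"
      then obtain n where "x = G \<inter> F n" by blast
      moreover have "F n \<in> M" using F(1) by blast
      ultimately show "x \<in> M" using G(1) by blast
    qed
    have dGF: "disjoint_family (\<lambda>n. G \<inter> F n)" using F(2) unfolding disjoint_family_on_def by auto
    have "(\<Union>n. G \<inter> F n) = G" using G by auto
    then have s: "(\<lambda>n. mu (G \<inter> F n)) sums mu G"
      using ca GF dGF G unfolding countably_additive_setfun_def by metis
    have "mu G = suminf (\<lambda>n. mu (G \<inter> F n))" using s by (simp add: sums_unique)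
    also have "\<dots> \<le> suminf (\<lambda>n. ?J (F n))"
    proof (rule suminf_le)
      show "mu (G \<inter> F n) \<le> ?J (F n)" for n using GF by (intro jpos_ge[OF ba]) auto
      show "summable (\<lambda>n. mu (G \<inter> F n))" using s by (simp add: sums_iff)
    qed (rule summ)
    finally show "mu G \<le> suminf (\<lambda>n. ?J (F n))" .
  qed
  show "(\<lambda>n. ?J (F n)) sums ?J ?U" using summ le1 le2 by (simp add: sums_iff)
qed

end

locale posdec = algebra \<Omega> M for \<Omega> M +
  fixes MM :: "('a set \<Rightarrow> real) set" and p :: "'a set \<Rightarrow> real"
  assumes MMba: "\<And>mu. mu \<in> MM \<Longrightarrow> ba M mu"
    and bap: "ba M p" and posp: "positive_setfun M p"
begin

definition sdS where "sdS S \<delta> E = {p F | F. F \<in> M \<and> F \<subseteq> E \<and> (\<forall>mu\<in>S. tv M mu F < \<delta>)}"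
definition sd where "sd S \<delta> E = Sup (sdS S \<delta> E)"
definition sIS where "sIS E = {sd S \<delta> E | S \<delta>. finite S \<and> S \<subseteq> MM \<and> \<delta> > 0}"
definition sI where "sI E = Inf (sIS E)"

lemma fap: "fin_additive M p" using bap ba_def by blast

lemma p_le_top: "F \<in> M \<Longrightarrow> p F \<le> p \<Omega>"
  using pos_mono[OF fap posp] sets_into_space by blast

lemma p_nonneg: "F \<in> M \<Longrightarrow> 0 \<le> p F" using posp unfolding positive_setfun_def by blast

lemma sdS_ne: "S \<subseteq> MM \<Longrightarrow> \<delta> > 0 \<Longrightarrow> sdS S \<delta> E \<noteq> {}"
proof -
  assume a: "S \<subseteq> MM" "\<delta> > 0"
  have "\<forall>mu\<in>S. tv M mu {} < \<delta>" using a tv_empty MMba by auto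
  then have "p {} \<in> sdS S \<delta> E" unfolding sdS_def by (intro CollectI exI[of _ "{}"]) auto
  then show ?thesis by blast
qed

lemma sdS_bdd: "bdd_above (sdS S \<delta> E)"
proof (rule bdd_aboveI)
  fix x assume "x \<in> sdS S \<delta> E"
  then show "x \<le> p \<Omega>" unfolding sdS_def using p_le_top by auto
qed

lemma sd_ge: "F \<in> M \<Longrightarrow> F \<subseteq> E \<Longrightarrow> (\<And>mu. mu \<in> S \<Longrightarrow> tv M mu F < \<delta>) \<Longrightarrow> p F \<le> sd S \<delta> E"
  unfolding sd_def by (rule cSup_upper[OF _ sdS_bdd]) (auto simp: sdS_def)

lemma sd_le: "S \<subseteq> MM \<Longrightarrow> \<delta> > 0 \<Longrightarrow>
    (\<And>F. F \<in> M \<Longrightarrow> F \<subseteq> E \<Longrightarrow> (\<forall>mu\<in>S. tv M mu F < \<delta>) \<Longrightarrow> p F \<le> c) \<Longrightarrow> sd S \<delta> E \<le> c"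
  unfolding sd_def by (rule cSup_least[OF sdS_ne]) (auto simp: sdS_def)

lemma sd_nonneg: "S \<subseteq> MM \<Longrightarrow> \<delta> > 0 \<Longrightarrow> 0 \<le> sd S \<delta> E"
proof -
  assume a: "S \<subseteq> MM" "\<delta> > 0"
  have "\<forall>mu\<in>S. tv M mu {} < \<delta>" using a tv_empty MMba by auto
  then have "p {} \<le> sd S \<delta> E" by (intro sd_ge) auto
  then show ?thesis using fa_empty[OF fap] by simp
qed

lemma sd_le_p: "S \<subseteq> MM \<Longrightarrow> \<delta> > 0 \<Longrightarrow> E \<in> M \<Longrightarrow> sd S \<delta> E \<le> p E"
  by (rule sd_le) (auto intro: pos_mono[OF fap posp])

lemma sd_anti: "S \<subseteq> S' \<Longrightarrow> S' \<subseteq> MM \<Longrightarrow> 0 < \<delta>' \<Longrightarrow> \<delta>' \<le> \<delta> \<Longrightarrow> sd S' \<delta>' E \<le> sd S \<delta> E"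
  unfolding sd_def
proof (rule cSup_subset_mono[OF sdS_ne sdS_bdd])
  assume a: "S \<subseteq> S'" "S' \<subseteq> MM" "0 < \<delta>'" "\<delta>' \<le> \<delta>"
  show "sdS S' \<delta>' E \<subseteq> sdS S \<delta> E"
  proof
    fix x assume "x \<in> sdS S' \<delta>' E"
    then obtain F where F: "x = p F" "F \<in> M" "F \<subseteq> E" "\<forall>mu\<in>S'. tv M mu F < \<delta>'" unfolding sdS_def by blast
    then have "\<forall>mu\<in>S. tv M mu F < \<delta>" using a by force
    then show "x \<in> sdS S \<delta> E" using F unfolding sdS_def by blast
  qed
qed

lemma sd_split:
  assumes S: "S \<subseteq> MM" "\<delta> > 0" and E: "E1 \<in> M" "E2 \<in> M" "E1 \<inter> E2 = {}"
  shows "sd S \<delta> (E1 \<union> E2) \<le> sd S \<delta> E1 + sd S \<delta> E2"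
proof (rule sd_le[OF S])
  fix F assume F: "F \<in> M" "F \<subseteq> E1 \<union> E2" "\<forall>mu\<in>S. tv M mu F < \<delta>"
  have "F - E1 = F \<inter> E2" using F(2) E(3) by blast
  then have "p F = p (F \<inter> E1) + p (F \<inter> E2)" using fa_split[OF fap F(1) E(1)] by simp
  also have "\<dots> \<le> sd S \<delta> E1 + sd S \<delta> E2"
  proof (intro add_mono sd_ge)
    fix mu assume "mu \<in> S"
    then show "tv M mu (F \<inter> E1) < \<delta>" "tv M mu (F \<inter> E2) < \<delta>"
      using F(3) tv_mono[OF MMba, of mu] S(1) by (meson Int_lower1 le_less_trans subsetD)+
  qed (use F E in auto)
  finally show "p F \<le> sd S \<delta> E1 + sd S \<delta> E2" .
qed

lemma sd_join:
  assumes S: "S \<subseteq> MM" "\<delta>1 > 0" "\<delta>2 > 0" and E: "E1 \<in> M" "E2 \<in> M" "E1 \<inter> E2 = {}"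
  shows "sd S \<delta>1 E1 + sd S \<delta>2 E2 \<le> sd S (\<delta>1 + \<delta>2) (E1 \<union> E2)"
  unfolding sd_def[of S \<delta>1] sd_def[of S \<delta>2]
proof (rule Sup_add_le[OF sdS_ne[OF S(1,2)] sdS_ne[OF S(1,3)]])
  fix a b assume "a \<in> sdS S \<delta>1 E1" "b \<in> sdS S \<delta>2 E2"
  then obtain F1 F2 where F1: "a = p F1" "F1 \<in> M" "F1 \<subseteq> E1" "\<forall>mu\<in>S. tv M mu F1 < \<delta>1"
    and F2: "b = p F2" "F2 \<in> M" "F2 \<subseteq> E2" "\<forall>mu\<in>S. tv M mu F2 < \<delta>2" unfolding sdS_def by blast
  have d: "F1 \<inter> F2 = {}" using F1(3) F2(3) E(3) by blast
  have "a + b = p (F1 \<union> F2)" using fa_un[OF fap F1(2) F2(2) d] F1(1) F2(1) by simp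
  also have "\<dots> \<le> sd S (\<delta>1 + \<delta>2) (E1 \<union> E2)"
  proof (rule sd_ge)
    show "F1 \<union> F2 \<in> M" using F1(2) F2(2) by blast
    show "F1 \<union> F2 \<subseteq> E1 \<union> E2" using F1(3) F2(3) by blast
    fix mu assume mu: "mu \<in> S"
    have "tv M mu (F1 \<union> F2) \<le> tv M mu F1 + tv M mu F2"
      using mu S(1) by (intro tv_subadd[OF MMba F1(2) F2(2)]) auto
    then show "tv M mu (F1 \<union> F2) < \<delta>1 + \<delta>2" using F1(4) F2(4) mu by fastforce
  qed
  finally show "a + b \<le> sd S (\<delta>1 + \<delta>2) (E1 \<union> E2)" .
qed

lemma sIS_ne: "sIS E \<noteq> {}"
proof -
  have "sd {} 1 E \<in> sIS E" unfolding sIS_def by (intro CollectI exI[of _ "{}"] exI[of _ "1::real"]) auto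
  then show ?thesis by blast
qed

lemma sIS_bdd: "bdd_below (sIS E)"
  by (rule bdd_belowI[of _ 0]) (auto simp: sIS_def intro: sd_nonneg)

lemma sI_le: "finite S \<Longrightarrow> S \<subseteq> MM \<Longrightarrow> \<delta> > 0 \<Longrightarrow> sI E \<le> sd S \<delta> E"
  unfolding sI_def by (rule cInf_lower[OF _ sIS_bdd]) (auto simp: sIS_def)

lemma sI_ge: "(\<And>S \<delta>. finite S \<Longrightarrow> S \<subseteq> MM \<Longrightarrow> \<delta> > 0 \<Longrightarrow> c \<le> sd S \<delta> E) \<Longrightarrow> c \<le> sI E"
  unfolding sI_def by (rule cInf_greatest[OF sIS_ne]) (auto simp: sIS_def)

lemma sI_nonneg: "0 \<le> sI E"
  by (rule sI_ge) (rule sd_nonneg)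

lemma sI_le_p: "E \<in> M \<Longrightarrow> sI E \<le> p E"
  using sI_le[of "{}" 1 E] sd_le_p[of "{}" 1 E] by simp

lemma sI_fa: "fin_additive M sI"
  unfolding fin_additive_def
proof (intro ballI impI)
  fix E1 E2 assume E: "E1 \<in> M" "E2 \<in> M" "E1 \<inter> E2 = {}"
  show "sI (E1 \<union> E2) = sI E1 + sI E2"
  proof (rule order_antisym)
    show "sI (E1 \<union> E2) \<le> sI E1 + sI E2"
      unfolding sI_def[of E1] sI_def[of E2]
    proof (rule Inf_add_ge[OF sIS_ne sIS_ne])
      fix a b assume "a \<in> sIS E1" "b \<in> sIS E2"
      then obtain S1 d1 S2 d2 where A: "a = sd S1 d1 E1" "finite S1" "S1 \<subseteq> MM" "d1 > 0"
        and B: "b = sd S2 d2 E2" "finite S2" "S2 \<subseteq> MM" "d2 > 0" unfolding sIS_def by blast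
      let ?S = "S1 \<union> S2" and ?d = "min d1 d2"
      have S: "finite ?S" "?S \<subseteq> MM" "?d > 0" using A B by auto
      have "sI (E1 \<union> E2) \<le> sd ?S ?d (E1 \<union> E2)" by (rule sI_le[OF S])
      also have "\<dots> \<le> sd ?S ?d E1 + sd ?S ?d E2" by (rule sd_split[OF S(2,3) E])
      also have "\<dots> \<le> a + b" unfolding A(1) B(1)
        by (intro add_mono sd_anti) (use S A B in auto)
      finally show "sI (E1 \<union> E2) \<le> a + b" .
    qed
    show "sI E1 + sI E2 \<le> sI (E1 \<union> E2)"
    proof (rule sI_ge)
      fix S \<delta> assume S: "finite S" "S \<subseteq> MM" "(\<delta>::real) > 0"
      have "sI E1 + sI E2 \<le> sd S (\<delta>/2) E1 + sd S (\<delta>/2) E2"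
        using S by (intro add_mono sI_le) auto
      also have "\<dots> \<le> sd S (\<delta>/2 + \<delta>/2) (E1 \<union> E2)" using S by (intro sd_join E) auto
      finally show "sI E1 + sI E2 \<le> sd S \<delta> (E1 \<union> E2)" by simp
    qed
  qed
qed

lemma sI_ba: "ba M sI"
proof -
  have "\<forall>a\<in>M. \<bar>sI a\<bar> \<le> p \<Omega>" using sI_nonneg sI_le_p p_le_top by (smt (verit))
  then show ?thesis unfolding ba_def bdd_setfun_def using sI_fa by blast
qed

lemma sI_pos: "positive_setfun M sI"
  unfolding positive_setfun_def using sI_nonneg by blast

lemma sI_sing: assumes mu: "mu \<in> MM" shows "singular \<Omega> M sI mu"
  unfolding singular_def
proof (intro allI impI)
  fix \<epsilon> :: real assume \<epsilon>: "\<epsilon> > 0"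
  let ?e = "\<epsilon> / 3"
  have e: "?e > 0" using \<epsilon> by simp
  have Smu: "{mu} \<subseteq> MM" using mu by simp
  define G where "G = (\<lambda>\<delta>. sd {mu} \<delta> \<Omega>) ` {0<..}"
  have Gne: "G \<noteq> {}" unfolding G_def by auto
  have Gbdd: "bdd_below G" unfolding G_def by (rule bdd_belowI[of _ 0]) (use sd_nonneg Smu in auto)
  define L where "L = Inf G"
  have "Inf G < L + ?e" using e L_def by simp
  then obtain x where "x \<in> G" "x < L + ?e" using cInf_less_iff[OF Gne Gbdd] by blast
  then obtain \<delta>0 where d0: "\<delta>0 > 0" "sd {mu} \<delta>0 \<Omega> < L + ?e"
    unfolding G_def by auto
  define \<delta> where "\<delta> = min (\<delta>0 / 2) ?e"
  have d: "\<delta> > 0" "\<delta> \<le> ?e" "\<delta> + \<delta> \<le> \<delta>0" using d0 e unfolding \<delta>_def by auto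
  have "sd {mu} (\<delta> + \<delta>) \<Omega> \<le> sd {mu} \<delta>0 \<Omega>" using d Smu by (intro sd_anti) auto
  then have g2: "sd {mu} (\<delta> + \<delta>) \<Omega> < L + ?e" using d0 by simp
  have g1: "L \<le> sd {mu} \<delta> \<Omega>" unfolding L_def G_def
    by (rule cInf_lower) (use d Gbdd G_def in auto)
  have "sd {mu} \<delta> \<Omega> - ?e < Sup (sdS {mu} \<delta> \<Omega>)" using e unfolding sd_def by simp
  then obtain x where "x \<in> sdS {mu} \<delta> \<Omega>" "sd {mu} \<delta> \<Omega> - ?e < x"
    using less_cSup_iff[OF sdS_ne[OF Smu d(1)] sdS_bdd] by blast
  then obtain F where F: "F \<in> M" "tv M mu F < \<delta>" "p F > sd {mu} \<delta> \<Omega> - ?e"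
    unfolding sdS_def by auto
  have FO: "F \<subseteq> \<Omega>" using F(1) sets_into_space by blast
  define E where "E = \<Omega> - F"
  have EM: "E \<in> M" unfolding E_def using F(1) by blast
  have EF: "E \<inter> F = {}" "E \<union> F = \<Omega>" using FO unfolding E_def by auto
  have "sI E \<le> sd {mu} \<delta> E" using Smu d by (intro sI_le) auto
  moreover have "sd {mu} \<delta> E + sd {mu} \<delta> F \<le> sd {mu} (\<delta> + \<delta>) \<Omega>"
    using sd_join[OF Smu d(1) d(1) EM F(1) EF(1)] EF(2) by simp
  moreover have "p F \<le> sd {mu} \<delta> F" using F by (intro sd_ge) auto
  ultimately have sE: "sI E < 2 * ?e" using g1 g2 F(3) by linarith
  have "tv M sI E = sI E" by (rule tv_pos[OF sI_ba sI_pos EM])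
  moreover have "\<Omega> - E = F" using FO unfolding E_def by auto
  ultimately have "tv M sI E + tv M mu (\<Omega> - E) < 2 * ?e + \<delta>" using sE F(2) by simp
  also have "\<dots> \<le> \<epsilon>" using d by simp
  finally show "\<exists>E\<in>M. tv M sI E + tv M mu (\<Omega> - E) < \<epsilon>" using EM by blast
qed

lemma sI_ctrl:
  "\<exists>T. countable T \<and> T \<subseteq> MM \<and> (\<forall>\<epsilon>>0. \<exists>S \<delta>. finite S \<and> S \<subseteq> T \<and> \<delta> > 0 \<and>
      (\<forall>E\<in>M. (\<forall>mu\<in>S. tv M mu E < \<delta>) \<longrightarrow> p E - sI E < \<epsilon>))"
proof -
  have "\<forall>k::nat. \<exists>q. finite (fst q) \<and> fst q \<subseteq> MM \<and> snd q > 0 \<and> sd (fst q) (snd q) \<Omega> < sI \<Omega> + 1 / Suc k"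
  proof
    fix k :: nat
    have "sI \<Omega> < sI \<Omega> + 1 / Suc k" by simp
    then obtain x where "x \<in> sIS \<Omega>" "x < sI \<Omega> + 1 / Suc k"
      using cInf_less_iff[OF sIS_ne sIS_bdd] unfolding sI_def by blast
    then show "\<exists>q. finite (fst q) \<and> fst q \<subseteq> MM \<and> snd q > 0 \<and> sd (fst q) (snd q) \<Omega> < sI \<Omega> + 1 / Suc k"
      unfolding sIS_def by force
  qed
  then obtain q where q: "\<And>k. finite (fst (q k)) \<and> fst (q k) \<subseteq> MM \<and> snd (q k) > 0 \<and>
      sd (fst (q k)) (snd (q k)) \<Omega> < sI \<Omega> + 1 / Suc k"
    using choice[of "\<lambda>k q. finite (fst q) \<and> fst q \<subseteq> MM \<and> snd q > 0 \<and> sd (fst q) (snd q) \<Omega> < sI \<Omega> + 1 / Suc k"]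
    by blast
  define T where "T = (\<Union>k. fst (q k))"
  have "countable T" unfolding T_def using q by (intro countable_UN) (auto intro: countable_finite)
  moreover have "T \<subseteq> MM" unfolding T_def using q by blast
  moreover have "\<exists>S \<delta>. finite S \<and> S \<subseteq> T \<and> \<delta> > 0 \<and>
      (\<forall>E\<in>M. (\<forall>mu\<in>S. tv M mu E < \<delta>) \<longrightarrow> p E - sI E < \<epsilon>)" if \<epsilon>: "\<epsilon> > 0" for \<epsilon>
  proof -
    obtain k :: nat where k: "1 / Suc k < \<epsilon>" using \<epsilon>
      by (metis Suc_eq_plus1 nat_approx_posE)
    let ?S = "fst (q k)" and ?d = "snd (q k)"
    have S: "finite ?S" "?S \<subseteq> MM" "?d > 0" "sd ?S ?d \<Omega> < sI \<Omega> + 1 / Suc k" using q by auto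
    have "p E - sI E < \<epsilon>" if E: "E \<in> M" "\<forall>mu\<in>?S. tv M mu E < ?d / 2" for E
    proof -
      have EO: "E \<subseteq> \<Omega>" using E(1) sets_into_space by blast
      have CM: "\<Omega> - E \<in> M" using E(1) by blast
      have "sI \<Omega> = sI ((\<Omega> - E) \<union> E)" using EO by (simp add: Un_absorb2)
      also have "\<dots> = sI (\<Omega> - E) + sI E" using sI_fa CM E(1) unfolding fin_additive_def by blast
      finally have sIE: "sI E = sI \<Omega> - sI (\<Omega> - E)" by simp
      have "sI (\<Omega> - E) \<le> sd ?S (?d/2) (\<Omega> - E)" using S by (intro sI_le) auto
      moreover have "p E \<le> sd ?S (?d/2) E" using E by (intro sd_ge) auto
      moreover have "sd ?S (?d/2) (\<Omega> - E) + sd ?S (?d/2) E \<le> sd ?S (?d/2 + ?d/2) ((\<Omega> - E) \<union> E)"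
        using S by (intro sd_join CM E(1)) auto
      moreover have "(\<Omega> - E) \<union> E = \<Omega>" using EO by auto
      ultimately have "p E - sI E \<le> sd ?S ?d \<Omega> - sI \<Omega>" using sIE by simp
      then show ?thesis using S(4) k by simp
    qed
    moreover have "?S \<subseteq> T" unfolding T_def by blast
    ultimately show ?thesis using S by (intro exI[of _ ?S] exI[of _ "?d/2"]) auto
  qed
  ultimately show ?thesis by blast
qed

end

context algebra
begin

definition cterm :: "(nat \<Rightarrow> real) \<Rightarrow> (nat \<Rightarrow> 'a set \<Rightarrow> real) \<Rightarrow> nat \<Rightarrow> 'a set \<Rightarrow> real" where
  "cterm \<alpha> mus n E = \<alpha> n * (tv M (mus n) E / max 1 (ba_norm \<Omega> M (mus n)))"

lemma cterm_bounds:
  assumes ba: "\<And>k. ba M (mus k)" and a: "\<And>k. \<alpha> k \<ge> 0" and E: "E \<in> M"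
  shows "0 \<le> cterm \<alpha> mus n E" "cterm \<alpha> mus n E \<le> \<alpha> n"
    "cterm \<alpha> mus n E \<le> \<alpha> n * tv M (mus n) E"
proof -
  have t0: "0 \<le> tv M (mus n) E" using tv_nonneg[OF ba[of n]] .
  have a: "\<alpha> n \<ge> 0" using a[of n] .
  have t1: "tv M (mus n) E \<le> max 1 (ba_norm \<Omega> M (mus n))"
    using tv_le_norm[OF ba[of n] E] unfolding ba_norm_def by simp
  have mpos: "max 1 (ba_norm \<Omega> M (mus n)) \<ge> 1" by simp
  have r0: "0 \<le> tv M (mus n) E / max 1 (ba_norm \<Omega> M (mus n))" using t0 mpos by simp
  have r1: "tv M (mus n) E / max 1 (ba_norm \<Omega> M (mus n)) \<le> 1" using t1 mpos by simp
  have i1: "1 / max 1 (ba_norm \<Omega> M (mus n)) \<le> 1" using mpos by simp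
  have r2: "tv M (mus n) E / max 1 (ba_norm \<Omega> M (mus n)) \<le> tv M (mus n) E"
    using mult_left_le[OF i1 t0] by simp
  show "0 \<le> cterm \<alpha> mus n E" unfolding cterm_def by (rule mult_nonneg_nonneg[OF a r0])
  show "cterm \<alpha> mus n E \<le> \<alpha> n" unfolding cterm_def by (rule mult_left_le[OF r1 a])
  show "cterm \<alpha> mus n E \<le> \<alpha> n * tv M (mus n) E" unfolding cterm_def by (rule mult_left_mono[OF r2 a])
qed

lemma conv_facts:
  assumes ba: "\<And>n. ba M (mus n)" and a: "\<And>n. \<alpha> n \<ge> 0" and s: "\<alpha> sums 1"
  defines "m \<equiv> \<lambda>E. \<Sum>n. cterm \<alpha> mus n E"
  shows "\<And>E. E \<in> M \<Longrightarrow> summable (\<lambda>n. cterm \<alpha> mus n E)"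
    and "\<And>E n. E \<in> M \<Longrightarrow> cterm \<alpha> mus n E \<le> m E"
    and "ba M m" "positive_setfun M m" "\<And>E. E \<in> M \<Longrightarrow> tv M m E = m E"
proof -
  have sa: "summable \<alpha>" using s by (simp add: sums_iff)
  show summ: "summable (\<lambda>n. cterm \<alpha> mus n E)" if E: "E \<in> M" for E
    by (rule summable_comparison_test[OF _ sa]) (use cterm_bounds[where mus=mus and \<alpha>=\<alpha>, OF ba a E] in auto)
  show ge: "cterm \<alpha> mus n E \<le> m E" if E: "E \<in> M" for E n
    using sum_le_suminf[OF summ[OF E], of "{n}"] cterm_bounds[where mus=mus and \<alpha>=\<alpha>, OF ba a E] unfolding m_def by simp
  have nn: "0 \<le> m E" if E: "E \<in> M" for E
    unfolding m_def by (rule suminf_nonneg[OF summ[OF E]]) (use cterm_bounds[where mus=mus and \<alpha>=\<alpha>, OF ba a E] in auto)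
  have le1: "m E \<le> 1" if E: "E \<in> M" for E
  proof -
    have "m E \<le> suminf \<alpha>" unfolding m_def
      by (rule suminf_le[OF _ summ[OF E] sa]) (use cterm_bounds[where mus=mus and \<alpha>=\<alpha>, OF ba a E] in auto)
    then show ?thesis using s by (simp add: sums_iff)
  qed
  have fa: "fin_additive M m" unfolding fin_additive_def
  proof (intro ballI impI)
    fix E1 E2 assume E: "E1 \<in> M" "E2 \<in> M" "E1 \<inter> E2 = {}"
    have "cterm \<alpha> mus n (E1 \<union> E2) = cterm \<alpha> mus n E1 + cterm \<alpha> mus n E2" for n
      unfolding cterm_def using tv_additive[OF ba[of n] E] by (simp add: add_divide_distrib distrib_left)
    then show "m (E1 \<union> E2) = m E1 + m E2" unfolding m_def
      using suminf_add[OF summ[OF E(1)] summ[OF E(2)]] by simp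
  qed
  show pos: "positive_setfun M m" unfolding positive_setfun_def using nn by blast
  have "\<bar>m E\<bar> \<le> 1" if "E \<in> M" for E using nn[OF that] le1[OF that] by simp
  then show bam: "ba M m" unfolding ba_def bdd_setfun_def using fa by blast
  show "tv M m E = m E" if "E \<in> M" for E by (rule tv_pos[OF bam pos that])
qed

lemma conv_sing:
  assumes ban: "ba M nu" and ba: "\<And>n. ba M (mus n)" and a: "\<And>n. \<alpha> n \<ge> 0" and s: "\<alpha> sums 1"
    and sing: "\<And>n. singular \<Omega> M nu (mus n)"
  shows "singular \<Omega> M nu (\<lambda>E. \<Sum>n. cterm \<alpha> mus n E)"
  unfolding singular_def
proof (intro allI impI)
  fix \<epsilon> :: real assume \<epsilon>: "\<epsilon> > 0"
  define m where "m = (\<lambda>E. \<Sum>n. cterm \<alpha> mus n E)"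
  note cf = conv_facts[where mus=mus and \<alpha>=\<alpha>, OF ba a s]
  let ?e = "\<epsilon> / 3"
  have e: "?e > 0" using \<epsilon> by simp
  have "(\<lambda>N. \<Sum>n<N. \<alpha> n) \<longlonglongrightarrow> 1" using s by (simp add: sums_def)
  from LIMSEQ_D[OF this e] obtain N where N0: "\<forall>n\<ge>N. norm ((\<Sum>i<n. \<alpha> i) - 1) < ?e" by blast
  then have N: "\<And>n. n \<ge> N \<Longrightarrow> \<bar>(\<Sum>i<n. \<alpha> i) - 1\<bar> < ?e" by simp
  let ?d = "?e / (N + 1)"
  have d: "?d > 0" using e by simp
  have "\<forall>n. \<exists>E. E \<in> M \<and> tv M nu E + tv M (mus n) (\<Omega> - E) < ?d"
    using sing d unfolding singular_def by blast
  from choice[OF this] obtain Ef where Ef0: "\<forall>n. Ef n \<in> M \<and> tv M nu (Ef n) + tv M (mus n) (\<Omega> - Ef n) < ?d"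
    by blast
  then have Ef: "\<And>n. Ef n \<in> M" "\<And>n. tv M nu (Ef n) + tv M (mus n) (\<Omega> - Ef n) < ?d" by auto
  define E where "E = (\<Union>n<N. Ef n)"
  have EM: "E \<in> M" unfolding E_def using Ef(1) by (intro finite_UN) auto
  have tvn: "tv M nu (Ef n) < ?d" for n using Ef(2)[of n] tv_nonneg[OF ba[of n], of "\<Omega> - Ef n"] by simp
  have tvm: "tv M (mus n) (\<Omega> - Ef n) < ?d" for n using Ef(2)[of n] tv_nonneg[OF ban, of "Ef n"] by simp
  have "tv M nu E \<le> (\<Sum>n<N. tv M nu (Ef n))" unfolding E_def by (rule tv_Union_le[OF ban]) (use Ef in auto)
  also have "\<dots> \<le> (\<Sum>n<N. ?d)" by (intro sum_mono less_imp_le tvn)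
  also have "\<dots> = N * ?d" by simp
  also have Nd: "\<dots> < ?e" using e by (simp add: field_simps)
  finally have part1: "tv M nu E < ?e" .
  let ?X = "\<Omega> - E"
  have XM: "?X \<in> M" using EM by blast
  have al1: "\<alpha> n \<le> 1" for n
    using sum_le_suminf[of \<alpha> "{n}"] s a by (simp add: sums_iff)
  have head: "(\<Sum>n<N. cterm \<alpha> mus n ?X) \<le> N * ?d"
  proof -
    have "cterm \<alpha> mus n ?X \<le> ?d" if "n < N" for n
    proof -
      have "cterm \<alpha> mus n ?X \<le> \<alpha> n * tv M (mus n) ?X" using cterm_bounds(3)[where mus=mus and \<alpha>=\<alpha>, OF ba a XM] .
      also have "\<dots> \<le> 1 * tv M (mus n) ?X" using al1 tv_nonneg[OF ba[of n]] by (intro mult_right_mono) auto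
      also have "\<dots> \<le> tv M (mus n) (\<Omega> - Ef n)"
      proof -
        have "?X \<subseteq> \<Omega> - Ef n" using that unfolding E_def by blast
        then show ?thesis using tv_mono[OF ba[of n]] by simp
      qed
      finally show ?thesis using tvm[of n] by simp
    qed
    then have "(\<Sum>n<N. cterm \<alpha> mus n ?X) \<le> (\<Sum>n<N. ?d)" by (intro sum_mono) auto
    then show ?thesis by simp
  qed
  have tail: "(\<Sum>k. cterm \<alpha> mus (k + N) ?X) \<le> (\<Sum>k. \<alpha> (k + N))"
  proof (rule suminf_le)
    show "cterm \<alpha> mus (k + N) ?X \<le> \<alpha> (k + N)" for k using cterm_bounds(2)[where mus=mus and \<alpha>=\<alpha>, OF ba a XM] .
    show "summable (\<lambda>k. cterm \<alpha> mus (k + N) ?X)" by (rule summable_ignore_initial_segment[OF cf(1)[OF XM]])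
    show "summable (\<lambda>k. \<alpha> (k + N))" using s by (intro summable_ignore_initial_segment) (simp add: sums_iff)
  qed
  have "suminf \<alpha> = (\<Sum>k. \<alpha> (k + N)) + (\<Sum>i<N. \<alpha> i)"
    using s by (intro suminf_split_initial_segment) (simp add: sums_iff)
  moreover have "\<bar>(\<Sum>i<N. \<alpha> i) - 1\<bar> < ?e" by (rule N) simp
  then have Nn: "1 - (\<Sum>i<N. \<alpha> i) < ?e" by (simp only: abs_less_iff) linarith
  ultimately have tl: "(\<Sum>k. \<alpha> (k + N)) < ?e" using s by (simp add: sums_iff)
  have "m ?X = (\<Sum>k. cterm \<alpha> mus (k + N) ?X) + (\<Sum>n<N. cterm \<alpha> mus n ?X)"
    unfolding m_def by (rule suminf_split_initial_segment[OF cf(1)[OF XM]])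
  then have "m ?X < ?e + ?e" using head tail tl Nd by linarith
  moreover have "tv M m ?X = m ?X" unfolding m_def using cf(5)[OF XM] by simp
  ultimately have "tv M nu E + tv M m (\<Omega> - E) < \<epsilon>" using part1 by simp
  then show "\<exists>E\<in>M. tv M nu E + tv M (\<lambda>E. \<Sum>n. cterm \<alpha> mus n E) (\<Omega> - E) < \<epsilon>"
    using EM unfolding m_def by blast
qed

lemma convA_elim:
  assumes "m \<in> convA \<Omega> M MM"
  obtains \<alpha> mus where "\<And>n. mus n \<in> MM" "\<And>n. \<alpha> n \<ge> 0" "\<alpha> sums 1" "m = (\<lambda>E. \<Sum>n. cterm \<alpha> mus n E)"
  using assms unfolding convA_def cterm_def by blast

lemma mk_m:
  assumes T: "countable T" "T \<noteq> {}" "T \<subseteq> MM" and MMba: "\<And>mu. mu \<in> MM \<Longrightarrow> ba M mu"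
  shows "\<exists>m\<in>convA \<Omega> M MM. (\<forall>E\<in>M. tv M m E = m E) \<and>
           (\<forall>mu\<in>T. \<exists>c>0. \<forall>E\<in>M. tv M mu E \<le> c * m E)"
proof -
  define e where "e = from_nat_into T"
  define \<alpha> :: "nat \<Rightarrow> real" where "\<alpha> = (\<lambda>n. (1/2)^Suc n)"
  have eT: "e n \<in> T" for n unfolding e_def using from_nat_into[OF T(2)] .
  have eM: "e n \<in> MM" for n using eT T(3) by blast
  have ba: "ba M (e n)" for n using MMba[OF eM] .
  have a: "\<alpha> n \<ge> 0" for n unfolding \<alpha>_def by simp
  have s: "\<alpha> sums 1" unfolding \<alpha>_def by (rule power_half_series)
  define m where "m = (\<lambda>E. \<Sum>n. cterm \<alpha> e n E)"
  note cf = conv_facts[where mus=e and \<alpha>=\<alpha>, OF ba a s]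
  have mA: "m \<in> convA \<Omega> M MM" unfolding convA_def m_def cterm_def
    by (intro CollectI exI[of _ \<alpha>] exI[of _ e]) (use eM a s in auto)
  have tvm: "\<forall>E\<in>M. tv M m E = m E" unfolding m_def using cf(5) by blast
  have "\<exists>c>0. \<forall>E\<in>M. tv M mu E \<le> c * m E" if mu: "mu \<in> T" for mu
  proof -
    obtain n where n: "e n = mu" using from_nat_into_surj[OF T(1) mu] unfolding e_def by blast
    let ?c = "max 1 (ba_norm \<Omega> M mu) / \<alpha> n"
    have an: "\<alpha> n > 0" unfolding \<alpha>_def by simp
    have "?c > 0" using an by simp
    moreover have "tv M mu E \<le> ?c * m E" if E: "E \<in> M" for E
    proof -
      have mx: "max 1 (ba_norm \<Omega> M mu) > 0" by simp
      have "tv M mu E = ?c * cterm \<alpha> e n E" unfolding cterm_def n using an mx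
        by (simp add: field_simps)
      also have "\<dots> \<le> ?c * m E" using cf(2)[OF E, of n] \<open>?c > 0\<close> unfolding m_def
        by (intro mult_left_mono) auto
      finally show ?thesis .
    qed
    ultimately show ?thesis by blast
  qed
  then show ?thesis using mA tvm by blast
qed

end

context algebra
begin

lemma pos_decomp:
  assumes MMba: "\<And>mu. mu \<in> MM \<Longrightarrow> ba M mu" and bap: "ba M p" and posp: "positive_setfun M p"
  obtains s T where "ba M s" "positive_setfun M s" "\<And>E. E \<in> M \<Longrightarrow> s E \<le> p E"
    "\<And>mu. mu \<in> MM \<Longrightarrow> singular \<Omega> M s mu"
    "countable T" "T \<subseteq> MM"
    "\<And>\<epsilon>. \<epsilon> > 0 \<Longrightarrow> \<exists>S \<delta>. finite S \<and> S \<subseteq> T \<and> \<delta> > 0 \<and>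
      (\<forall>E\<in>M. (\<forall>mu\<in>S. tv M mu E < \<delta>) \<longrightarrow> p E - s E < \<epsilon>)"
proof -
  interpret posdec \<Omega> M MM p using MMba bap posp by unfold_locales auto
  obtain T where "countable T" "T \<subseteq> MM" "\<forall>\<epsilon>>0. \<exists>S \<delta>. finite S \<and> S \<subseteq> T \<and> \<delta> > 0 \<and>
      (\<forall>E\<in>M. (\<forall>mu\<in>S. tv M mu E < \<delta>) \<longrightarrow> p E - sI E < \<epsilon>)" using sI_ctrl by blast
  then show ?thesis using that[of sI T] sI_ba sI_pos sI_le_p sI_sing by blast
qed

lemma sing_diff:
  assumes b1: "ba M s1" and b2: "ba M s2" and bm: "ba M mu"
    and s1: "singular \<Omega> M s1 mu" and s2: "singular \<Omega> M s2 mu"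
  shows "singular \<Omega> M (\<lambda>E. s1 E - s2 E) mu"
  unfolding singular_def
proof (intro allI impI)
  fix \<epsilon> :: real assume e: "\<epsilon> > 0"
  obtain E1 where E1: "E1 \<in> M" "tv M s1 E1 + tv M mu (\<Omega> - E1) < \<epsilon>/2"
    using s1 e unfolding singular_def by (meson half_gt_zero)
  obtain E2 where E2: "E2 \<in> M" "tv M s2 E2 + tv M mu (\<Omega> - E2) < \<epsilon>/2"
    using s2 e unfolding singular_def by (meson half_gt_zero)
  define E where "E = E1 \<inter> E2"
  have EM: "E \<in> M" unfolding E_def using E1 E2 by blast
  have "tv M (\<lambda>E. s1 E - s2 E) E \<le> tv M s1 E + tv M s2 E" by (rule tv_diff[OF b1 b2])
  also have "\<dots> \<le> tv M s1 E1 + tv M s2 E2" unfolding E_def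
    by (intro add_mono tv_mono[OF b1] tv_mono[OF b2]) auto
  finally have a: "tv M (\<lambda>E. s1 E - s2 E) E \<le> tv M s1 E1 + tv M s2 E2" .
  have "\<Omega> - E = (\<Omega> - E1) \<union> (\<Omega> - E2)" unfolding E_def by blast
  then have "tv M mu (\<Omega> - E) \<le> tv M mu (\<Omega> - E1) + tv M mu (\<Omega> - E2)"
    using tv_subadd[OF bm, of "\<Omega> - E1" "\<Omega> - E2"] E1 E2 by auto
  then have "tv M (\<lambda>E. s1 E - s2 E) E + tv M mu (\<Omega> - E) < \<epsilon>" using a E1 E2 by linarith
  then show "\<exists>E\<in>M. tv M (\<lambda>E. s1 E - s2 E) E + tv M mu (\<Omega> - E) < \<epsilon>" using EM by blast
qed

lemma sing_convA:
  assumes MMba: "\<And>mu. mu \<in> MM \<Longrightarrow> ba M mu" and ban: "ba M nu"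
    and sing: "\<forall>mu\<in>MM. singular \<Omega> M nu mu" and m: "m \<in> convA \<Omega> M MM"
  shows "singular \<Omega> M nu m" "ba M m" "\<And>E. E \<in> M \<Longrightarrow> tv M m E = m E"
proof -
  obtain \<alpha> mus where am: "\<And>n. mus n \<in> MM" "\<And>n. \<alpha> n \<ge> 0" "\<alpha> sums 1" "m = (\<lambda>E. \<Sum>n. cterm \<alpha> mus n E)"
    using convA_elim[OF m] by blast
  have ba: "\<And>n. ba M (mus n)" using am(1) MMba by blast
  show "singular \<Omega> M nu m" unfolding am(4)
    by (rule conv_sing[where mus=mus and \<alpha>=\<alpha>, OF ban ba am(2,3)]) (use sing am(1) in blast)
  note cf = conv_facts[where mus=mus and \<alpha>=\<alpha>, OF ba am(2,3)]
  show "ba M m" unfolding am(4) using cf(3) .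
  show "tv M m E = m E" if "E \<in> M" for E unfolding am(4) using cf(5)[OF that] .
qed

end

context algebra
begin

lemma decomp_unique:
  assumes MMba: "\<And>mu. mu \<in> MM \<Longrightarrow> ba M mu"
    and D1: "is_decomp \<Omega> M MM lam lc lp" and D2: "is_decomp \<Omega> M MM lam lc' lp'"
  shows "\<And>F. F \<in> M \<Longrightarrow> lc' F = lc F"
proof -
  have bc: "ba M lc" and bp: "ba M lp" and eq1: "\<forall>E\<in>M. lam E = lc E + lp E"
    and sp: "\<forall>mu\<in>MM. singular \<Omega> M lp mu" using D1 unfolding is_decomp_def by auto
  obtain m where mA: "m \<in> convA \<Omega> M MM" and ac: "abs_cont M m lc" using D1 unfolding is_decomp_def by auto
  have bc': "ba M lc'" and bp': "ba M lp'" and eq2: "\<forall>E\<in>M. lam E = lc' E + lp' E"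
    and sp': "\<forall>mu\<in>MM. singular \<Omega> M lp' mu" using D2 unfolding is_decomp_def by auto
  obtain m' where mA': "m' \<in> convA \<Omega> M MM" and ac': "abs_cont M m' lc'" using D2 unfolding is_decomp_def by auto
  note s1 = sing_convA[OF MMba bp sp mA] and s2 = sing_convA[OF MMba bp' sp' mA]
  note s3 = sing_convA[OF MMba bp sp mA'] and s4 = sing_convA[OF MMba bp' sp' mA']
  define d where "d = (\<lambda>E. lc E - lc' E)"
  have bd: "ba M d" unfolding d_def by (rule ba_diff[OF bc bc'])
  have deq: "tv M d X = tv M (\<lambda>E. lp' E - lp E) X" for X
    by (rule tv_cong) (use eq1 eq2 in \<open>auto simp: d_def\<close>)
  have small: "tv M d \<Omega> < 4 * \<epsilon>" if e: "\<epsilon> > 0" for \<epsilon>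
  proof -
    obtain \<delta> where d1: "\<delta> > 0" "\<forall>E\<in>M. tv M m E < \<delta> \<longrightarrow> tv M lc E < \<epsilon>" using ac e unfolding abs_cont_def by blast
    obtain \<delta>' where d2: "\<delta>' > 0" "\<forall>E\<in>M. tv M m' E < \<delta>' \<longrightarrow> tv M lc' E < \<epsilon>" using ac' e unfolding abs_cont_def by blast
    define \<eta> where "\<eta> = min \<epsilon> (min \<delta> \<delta>')"
    have eta: "\<eta> > 0" "\<eta> \<le> \<epsilon>" "\<eta> \<le> \<delta>" "\<eta> \<le> \<delta>'" using e d1 d2 unfolding \<eta>_def by auto
    have h: "\<eta>/2 > 0" using eta by simp
    obtain E1 where E1: "E1 \<in> M" "tv M lp E1 + tv M m (\<Omega> - E1) < \<eta>/2" using s1(1) h unfolding singular_def by blast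
    obtain E3 where E3: "E3 \<in> M" "tv M lp' E3 + tv M m (\<Omega> - E3) < \<eta>/2" using s2(1) h unfolding singular_def by blast
    obtain E2 where E2: "E2 \<in> M" "tv M lp E2 + tv M m' (\<Omega> - E2) < \<eta>/2" using s3(1) h unfolding singular_def by blast
    obtain E4 where E4: "E4 \<in> M" "tv M lp' E4 + tv M m' (\<Omega> - E4) < \<eta>/2" using s4(1) h unfolding singular_def by blast
    have bm: "ba M m" using s1(2) . have bm': "ba M m'" using s3(2) .
    define G where "G = E1 \<inter> E3"
    define H where "H = E2 \<inter> E4"
    define K where "K = (\<Omega> - G) - H"
    define L where "L = (\<Omega> - G) \<inter> H"
    have GM: "G \<in> M" unfolding G_def using E1 E3 by blast
    have HM: "H \<in> M" unfolding H_def using E2 E4 by blast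
    have KM: "K \<in> M" unfolding K_def using GM HM by blast
    have LM: "L \<in> M" unfolding L_def using GM HM by blast
    have tn: "0 \<le> tv M mu X" if "ba M mu" for mu X using tv_nonneg[OF that] .
    have "\<Omega> - G = (\<Omega> - E1) \<union> (\<Omega> - E3)" unfolding G_def by blast
    then have "tv M m (\<Omega> - G) \<le> tv M m (\<Omega> - E1) + tv M m (\<Omega> - E3)"
      using tv_subadd[OF bm, of "\<Omega> - E1" "\<Omega> - E3"] E1 E3 by auto
    then have mG: "tv M m (\<Omega> - G) < \<eta>" using E1 E3 tn[OF bp, of E1] tn[OF bp', of E3] by linarith
    have "\<Omega> - H = (\<Omega> - E2) \<union> (\<Omega> - E4)" unfolding H_def by blast
    then have "tv M m' (\<Omega> - H) \<le> tv M m' (\<Omega> - E2) + tv M m' (\<Omega> - E4)"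
      using tv_subadd[OF bm', of "\<Omega> - E2" "\<Omega> - E4"] E2 E4 by auto
    then have mH: "tv M m' (\<Omega> - H) < \<eta>" using E2 E4 tn[OF bp, of E2] tn[OF bp', of E4] by linarith
    have "tv M m K \<le> tv M m (\<Omega> - G)" unfolding K_def by (rule tv_mono[OF bm]) auto
    then have "tv M lc K < \<epsilon>" using d1 KM mG eta by auto
    moreover have "tv M m' K \<le> tv M m' (\<Omega> - H)" unfolding K_def by (rule tv_mono[OF bm']) auto
    then have "tv M lc' K < \<epsilon>" using d2 KM mH eta by auto
    ultimately have tK: "tv M d K < 2 * \<epsilon>" using tv_diff[OF bc bc', of K] unfolding d_def by linarith
    have "tv M d G \<le> tv M lp' G + tv M lp G" unfolding deq by (rule tv_diff[OF bp' bp])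
    also have "\<dots> \<le> tv M lp' E3 + tv M lp E1" unfolding G_def
      by (intro add_mono tv_mono[OF bp'] tv_mono[OF bp]) auto
    finally have tG: "tv M d G < \<epsilon>" using E1 E3 tn[OF bm, of "\<Omega> - E1"] tn[OF bm, of "\<Omega> - E3"] eta by linarith
    have "tv M d L \<le> tv M d H" unfolding L_def by (rule tv_mono[OF bd]) auto
    also have "\<dots> \<le> tv M lp' H + tv M lp H" unfolding deq by (rule tv_diff[OF bp' bp])
    also have "\<dots> \<le> tv M lp' E4 + tv M lp E2" unfolding H_def
      by (intro add_mono tv_mono[OF bp'] tv_mono[OF bp]) auto
    finally have tL: "tv M d L < \<epsilon>" using E2 E4 tn[OF bm', of "\<Omega> - E2"] tn[OF bm', of "\<Omega> - E4"] eta by linarith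
    have GO: "G \<subseteq> \<Omega>" using GM sets_into_space by blast
    have "\<Omega> = G \<union> (L \<union> K)" unfolding L_def K_def using GO by blast
    moreover have "L \<inter> K = {}" unfolding L_def K_def by blast
    moreover have "G \<inter> (L \<union> K) = {}" unfolding L_def K_def by blast
    ultimately have "tv M d \<Omega> = tv M d G + (tv M d L + tv M d K)"
      using tv_additive[OF bd GM] tv_additive[OF bd LM KM] LM KM by (metis Un)
    then show ?thesis using tG tL tK by linarith
  qed
  have z: "tv M d \<Omega> \<le> 0"
  proof (rule ccontr)
    assume "\<not> tv M d \<Omega> \<le> 0"
    then have "tv M d \<Omega> / 4 > 0" by simp
    from small[OF this] show False by simp
  qed
  fix F assume F: "F \<in> M"
  have "\<bar>d F\<bar> \<le> tv M d \<Omega>" using abs_le_tv[OF bd F] tv_le_norm[OF bd F] by linarith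
  then show "lc' F = lc F" using z unfolding d_def by simp
qed

end

theorem mainTheorem1:
  fixes \<Omega> :: "'a set" and A :: "'a set set"
    and M :: "('a set \<Rightarrow> real) set" and lam :: "'a set \<Rightarrow> real"
  assumes "algebra \<Omega> A"
    and "ba A lam"
    and "M \<subseteq> {mu. ba A mu}"
    and "M \<noteq> {}"
  shows "\<exists>lc lp. is_decomp \<Omega> A M lam lc lp \<and>
           (\<forall>lc' lp'. is_decomp \<Omega> A M lam lc' lp' \<longrightarrow>
              (\<forall>E\<in>A. lc' E = lc E \<and> lp' E = lp E)) \<and>
           (positive_setfun A lam \<longrightarrow> positive_setfun A lc \<and> positive_setfun A lp) \<and>
           (countably_additive_setfun A lam \<longrightarrow>
              countably_additive_setfun A lc \<and> countably_additive_setfun A lp)"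
proof -
  interpret algebra \<Omega> A by (rule assms(1))
  have MMba: "\<And>mu. mu \<in> M \<Longrightarrow> ba A mu" using assms(3) by blast
  have bl: "ba A lam" by (rule assms(2))
  define P where "P = jpos A lam"
  define N where "N = (\<lambda>E. P E - lam E)"
  have bP: "ba A P" unfolding P_def by (rule jpos_ba[OF bl])
  have pP: "positive_setfun A P" unfolding P_def by (rule jpos_pos[OF bl])
  have bN: "ba A N" unfolding N_def by (rule ba_diff[OF bP bl])
  have pN: "positive_setfun A N" unfolding positive_setfun_def N_def P_def
    using jpos_ge_self[OF bl] by simp
  obtain s1 T1 where s1: "ba A s1" "positive_setfun A s1" "\<And>E. E \<in> A \<Longrightarrow> s1 E \<le> P E"
    "\<And>mu. mu \<in> M \<Longrightarrow> singular \<Omega> A s1 mu" "countable T1" "T1 \<subseteq> M"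
    "\<And>\<epsilon>. \<epsilon> > 0 \<Longrightarrow> \<exists>S \<delta>. finite S \<and> S \<subseteq> T1 \<and> \<delta> > 0 \<and>
      (\<forall>E\<in>A. (\<forall>mu\<in>S. tv A mu E < \<delta>) \<longrightarrow> P E - s1 E < \<epsilon>)"
    using pos_decomp[OF MMba bP pP] by metis
  obtain s2 T2 where s2: "ba A s2" "positive_setfun A s2" "\<And>E. E \<in> A \<Longrightarrow> s2 E \<le> N E"
    "\<And>mu. mu \<in> M \<Longrightarrow> singular \<Omega> A s2 mu" "countable T2" "T2 \<subseteq> M"
    "\<And>\<epsilon>. \<epsilon> > 0 \<Longrightarrow> \<exists>S \<delta>. finite S \<and> S \<subseteq> T2 \<and> \<delta> > 0 \<and>
      (\<forall>E\<in>A. (\<forall>mu\<in>S. tv A mu E < \<delta>) \<longrightarrow> N E - s2 E < \<epsilon>)"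
    using pos_decomp[OF MMba bN pN] by metis
  define c1 where "c1 = (\<lambda>E. P E - s1 E)"
  define c2 where "c2 = (\<lambda>E. N E - s2 E)"
  define lc where "lc = (\<lambda>E. c1 E - c2 E)"
  define lp where "lp = (\<lambda>E. s1 E - s2 E)"
  have bc1: "ba A c1" unfolding c1_def by (rule ba_diff[OF bP s1(1)])
  have bc2: "ba A c2" unfolding c2_def by (rule ba_diff[OF bN s2(1)])
  have pc1: "positive_setfun A c1" unfolding positive_setfun_def c1_def using s1(3) by simp
  have pc2: "positive_setfun A c2" unfolding positive_setfun_def c2_def using s2(3) by simp
  have blc: "ba A lc" unfolding lc_def by (rule ba_diff[OF bc1 bc2])
  have blp: "ba A lp" unfolding lp_def by (rule ba_diff[OF s1(1) s2(1)])
  have sum: "\<forall>E\<in>A. lam E = lc E + lp E" unfolding lc_def lp_def c1_def c2_def N_def by simp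
  have singp: "\<forall>mu\<in>M. singular \<Omega> A lp mu" unfolding lp_def
    using sing_diff[OF s1(1) s2(1) MMba s1(4) s2(4)] by blast
  obtain mu0 where mu0: "mu0 \<in> M" using assms(4) by blast
  define T where "T = insert mu0 (T1 \<union> T2)"
  have T: "countable T" "T \<noteq> {}" "T \<subseteq> M" unfolding T_def using s1(5,6) s2(5,6) mu0 by auto
  obtain m where mA: "m \<in> convA \<Omega> A M" and tvm: "\<forall>E\<in>A. tv A m E = m E"
    and cm: "\<forall>mu\<in>T. \<exists>c>0. \<forall>E\<in>A. tv A mu E \<le> c * m E"
    using mk_m[OF T MMba] by blast
  obtain cf where cf: "\<And>mu. mu \<in> T \<Longrightarrow> cf mu > 0 \<and> (\<forall>E\<in>A. tv A mu E \<le> cf mu * m E)"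
    using bchoice[OF cm] by blast
  have ac: "abs_cont A m lc" unfolding abs_cont_def
  proof (intro allI impI)
    fix \<epsilon> :: real assume e: "\<epsilon> > 0"
    obtain S1 d1 where S1: "finite S1" "S1 \<subseteq> T1" "d1 > 0"
      "\<forall>E\<in>A. (\<forall>mu\<in>S1. tv A mu E < d1) \<longrightarrow> P E - s1 E < \<epsilon>/2" using s1(7)[of "\<epsilon>/2"] e by auto
    obtain S2 d2 where S2: "finite S2" "S2 \<subseteq> T2" "d2 > 0"
      "\<forall>E\<in>A. (\<forall>mu\<in>S2. tv A mu E < d2) \<longrightarrow> N E - s2 E < \<epsilon>/2" using s2(7)[of "\<epsilon>/2"] e by auto
    define S where "S = S1 \<union> S2"
    have ST: "S \<subseteq> T" unfolding S_def T_def using S1(2) S2(2) by auto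
    have fS: "finite S" unfolding S_def using S1 S2 by auto
    define C where "C = (\<Sum>mu\<in>S. cf mu) + 1"
    have cfpos: "\<And>mu. mu \<in> S \<Longrightarrow> 0 < cf mu" using cf ST by blast
    have Cpos: "C > 0" unfolding C_def using cfpos by (smt (verit) sum_nonneg)
    have cfC: "cf mu \<le> C" if "mu \<in> S" for mu
    proof -
      have "cf mu \<le> (\<Sum>mu\<in>S. cf mu)" 
        by (rule member_le_sum[OF that _ fS]) (use cfpos in \<open>auto intro: less_imp_le\<close>)
      then show ?thesis unfolding C_def by simp
    qed
    define \<delta> where "\<delta> = min d1 d2 / C"
    have dpos: "\<delta> > 0" unfolding \<delta>_def using S1(3) S2(3) Cpos by simp
    moreover have "tv A lc E < \<epsilon>" if E: "E \<in> A" "tv A m E < \<delta>" for E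
    proof -
      have mE: "m E < \<delta>" using tvm E by simp
      have m0: "0 \<le> m E" using tvm E tv_nonneg[of m] sing_convA(2)[OF MMba blp singp mA] by metis
      have small: "tv A mu E < min d1 d2" if mu: "mu \<in> S" for mu
      proof -
        have "tv A mu E \<le> cf mu * m E" using cf ST mu E(1) by blast
        also have "\<dots> \<le> C * m E" using cfC[OF mu] m0 by (intro mult_right_mono) auto
        also have "\<dots> < C * \<delta>" using mE Cpos by simp
        also have "\<dots> = min d1 d2" unfolding \<delta>_def using Cpos by simp
        finally show ?thesis .
      qed
      have "c1 E < \<epsilon>/2" unfolding c1_def using S1(4) E(1) small unfolding S_def by auto
      moreover have "c2 E < \<epsilon>/2" unfolding c2_def using S2(4) E(1) small unfolding S_def by auto
      moreover have "tv A lc E \<le> tv A c1 E + tv A c2 E" unfolding lc_def by (rule tv_diff[OF bc1 bc2])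
      moreover have "tv A c1 E = c1 E" by (rule tv_pos[OF bc1 pc1 E(1)])
      moreover have "tv A c2 E = c2 E" by (rule tv_pos[OF bc2 pc2 E(1)])
      ultimately show ?thesis by linarith
    qed
    ultimately show "\<exists>\<delta>>0. \<forall>E\<in>A. tv A m E < \<delta> \<longrightarrow> tv A lc E < \<epsilon>" by blast
  qed
  have D: "is_decomp \<Omega> A M lam lc lp"
    unfolding is_decomp_def using blc blp sum mA ac singp by blast
  have U: "\<forall>lc' lp'. is_decomp \<Omega> A M lam lc' lp' \<longrightarrow> (\<forall>E\<in>A. lc' E = lc E \<and> lp' E = lp E)"
  proof (intro allI impI ballI)
    fix lc' lp' E assume D': "is_decomp \<Omega> A M lam lc' lp'" and E: "E \<in> A"
    have "lc' E = lc E" using decomp_unique[OF MMba D D' E] .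
    moreover have "lam E = lc' E + lp' E" using D' E unfolding is_decomp_def by blast
    ultimately show "lc' E = lc E \<and> lp' E = lp E" using sum E by simp
  qed
  have Pos: "positive_setfun A lc \<and> positive_setfun A lp" if pl: "positive_setfun A lam"
  proof -
    have N0: "N E = 0" if "E \<in> A" for E unfolding N_def P_def using jpos_of_pos[OF bl pl that] by simp
    have s20: "s2 E = 0" if "E \<in> A" for E
      using s2(3)[OF that] N0[OF that] s2(2) that unfolding positive_setfun_def by force
    have "lc E \<ge> 0" if "E \<in> A" for E
      using pc1 that N0[OF that] s20[OF that] unfolding lc_def c2_def positive_setfun_def by simp
    moreover have "lp E \<ge> 0" if "E \<in> A" for E
      using s1(2) that s20[OF that] unfolding lp_def positive_setfun_def by simp
    ultimately show ?thesis unfolding positive_setfun_def by blast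
  qed
  have CA: "countably_additive_setfun A lc \<and> countably_additive_setfun A lp" if cl: "countably_additive_setfun A lam"
  proof -
    have caP: "countably_additive_setfun A P" unfolding P_def by (rule ca_jpos[OF bl cl])
    have caN: "countably_additive_setfun A N" unfolding N_def by (rule ca_diff[OF caP cl])
    have fa: "fin_additive A f" if "ba A f" for f using that ba_def by blast
    have ca_s1: "countably_additive_setfun A s1" by (rule ca_le[OF bP pP caP fa[OF s1(1)] s1(2) s1(3)])
    have ca_s2: "countably_additive_setfun A s2" by (rule ca_le[OF bN pN caN fa[OF s2(1)] s2(2) s2(3)])
    have ca_c1: "countably_additive_setfun A c1" unfolding c1_def by (rule ca_diff[OF caP ca_s1])
    have ca_c2: "countably_additive_setfun A c2" unfolding c2_def by (rule ca_diff[OF caN ca_s2])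
    show ?thesis unfolding lc_def lp_def using ca_diff[OF ca_c1 ca_c2] ca_diff[OF ca_s1 ca_s2] by blast
  qed
  show ?thesis using D U Pos CA by blast
qed

end
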